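(* Let $\Gamma$ be a connected quartic graph on $n\ge 11$ vertices whose algebraic connectivity $\mu=\mu(\Gamma)$ is minimum among all connected quartic graphs on $n$ vertices. Then: if $n\ge 11$, $\mu<0.355$; if $n\ge13$, $\mu<0.268$; if $n\ge18$, $\mu<0.129$; if $n\ge21$, $\mu<0.091$; if $n\ge 26$, $\mu<0.059$.
   Context: Quartic means 4-regular; graphs are finite and simple. The algebraic connectivity is the second smallest eigenvalue of the Laplacian $L=\Delta-A$. *)

theory Defs
  imports "Jordan_Normal_Form.Char_Poly" "HOL-Library.Multiset"
begin

definition simple_graph :: "nat \<Rightarrow> (nat \<Rightarrow> nat \<Rightarrow> bool) \<Rightarrow> bool" where
  "simple_graph n E \<longleftrightarrow>
     (\<forall>i j. E i j \<longrightarrow> i < n \<and> j < n) \<and> (\<forall>i j. E i j \<longrightarrow> E j i) \<and> (\<forall>i. \<not> E i i)"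

definition degree :: "nat \<Rightarrow> (nat \<Rightarrow> nat \<Rightarrow> bool) \<Rightarrow> nat \<Rightarrow> nat" where
  "degree n E i = card {j. j < n \<and> E i j}"

definition quartic :: "nat \<Rightarrow> (nat \<Rightarrow> nat \<Rightarrow> bool) \<Rightarrow> bool" where
  "quartic n E \<longleftrightarrow> simple_graph n E \<and> (\<forall>i<n. degree n E i = 4)"

definition connected_graph :: "nat \<Rightarrow> (nat \<Rightarrow> nat \<Rightarrow> bool) \<Rightarrow> bool" where
  "connected_graph n E \<longleftrightarrow> (\<forall>i<n. \<forall>j<n. E\<^sup>*\<^sup>* i j)"

definition laplacian :: "nat \<Rightarrow> (nat \<Rightarrow> nat \<Rightarrow> bool) \<Rightarrow> real mat" where
  "laplacian n E = mat n n (\<lambda>(i, j). if i = j then real (degree n E i)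
                                     else if E i j then -1 else 0)"

text \<open>Eigenvalues with multiplicity (roots of the characteristic polynomial; all real since L
  is real symmetric), sorted increasingly; the algebraic connectivity is the second one.\<close>
definition laplacian_eigenvalues :: "nat \<Rightarrow> (nat \<Rightarrow> nat \<Rightarrow> bool) \<Rightarrow> real list" where
  "laplacian_eigenvalues n E = sorted_list_of_multiset (proots (char_poly (laplacian n E)))"

definition algebraic_connectivity :: "nat \<Rightarrow> (nat \<Rightarrow> nat \<Rightarrow> bool) \<Rightarrow> real" where
  "algebraic_connectivity n E = laplacian_eigenvalues n E ! 1"

end

theory Submission
  imports Defs
begin

lemma sym_real_eigenvalue:
  fixes A :: "real mat"
  assumes A: "A \<in> carrier_mat n n" and sym: "\<And>i j. i < n \<Longrightarrow> j < n \<Longrightarrow> A $$ (i,j) = A $$ (j,i)"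
    and n: "n > 0"
  shows "\<exists>l. eigenvalue A l"
proof -
  define Ac where "Ac = map_mat complex_of_real A"
  have Ac: "Ac \<in> carrier_mat n n" using A unfolding Ac_def by auto
  obtain as where cp: "char_poly Ac = (\<Prod>a\<leftarrow>as. [:- a, 1:])" and las: "length as = n"
    using char_poly_factorized[OF Ac] by blast
  define a where "a = as ! 0"
  have "a \<in> set as" using las n unfolding a_def by auto
  hence "poly (char_poly Ac) a = 0" unfolding cp
    by (induct as, auto simp: poly_prod_list)
  hence "eigenvalue Ac a" using eigenvalue_root_char_poly[OF Ac] by auto
  then obtain v where ev: "eigenvector Ac v a" unfolding eigenvalue_def by auto
  hence v: "v \<in> carrier_vec n" "v \<noteq> 0\<^sub>v n" "Ac *\<^sub>v v = a \<cdot>\<^sub>v v"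
    using Ac unfolding eigenvector_def by auto
  have row: "(\<Sum>j<n. Ac $$ (i,j) * v $ j) = a * v $ i" if i: "i < n" for i
  proof -
    have "(Ac *\<^sub>v v) $ i = a * v $ i" using v(3) i v(1) by auto
    moreover have "(Ac *\<^sub>v v) $ i = (\<Sum>j<n. Ac $$ (i,j) * v $ j)"
      using i Ac v(1) by (auto simp: mult_mat_vec_def scalar_prod_def row_def lessThan_atLeast0 intro!: sum.cong)
    ultimately show ?thesis by simp
  qed
  define s where "s = (\<Sum>i<n. cnj (v $ i) * (\<Sum>j<n. Ac $$ (i,j) * v $ j))"
  define r where "r = (\<Sum>i<n. cnj (v $ i) * v $ i)"
  have s1: "s = a * r" unfolding s_def r_def using row by (simp add: sum_distrib_left mult.commute mult.left_commute)
  have AcE: "Ac $$ (i,j) = complex_of_real (A $$ (i,j))" if "i < n" "j < n" for i j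
    using that A unfolding Ac_def by auto
  have "cnj s = (\<Sum>i<n. \<Sum>j<n. v $ i * (Ac $$ (i,j) * cnj (v $ j)))"
    unfolding s_def by (simp add: sum_distrib_left AcE)
  also have "\<dots> = (\<Sum>j<n. \<Sum>i<n. v $ i * (Ac $$ (i,j) * cnj (v $ j)))" by (rule sum.swap)
  also have "\<dots> = s" unfolding s_def
    by (auto simp: sum_distrib_left AcE sym intro!: sum.cong)
  finally have s2: "cnj s = s" .
  have rre: "r = complex_of_real (\<Sum>i<n. (cmod (v $ i))^2)"
  proof -
    have "r = (\<Sum>i<n. complex_of_real ((cmod (v $ i))^2))"
      unfolding r_def by (intro sum.cong refl, metis complex_norm_square mult.commute)
    thus ?thesis by simp
  qed
  obtain i where i: "i < n" "v $ i \<noteq> 0" using v(1,2) by (metis carrier_vecD eq_vecI index_zero_vec(1,2))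
  have "(cmod (v $ i))^2 > 0" using i by auto
  moreover have "(cmod (v $ i))^2 \<le> (\<Sum>i<n. (cmod (v $ i))^2)"
    by (rule member_le_sum, insert i, auto)
  ultimately have rpos: "(\<Sum>i<n. (cmod (v $ i))^2) > 0" by linarith
  have "Im s = 0" using s2 by (metis cnj.sel(2) neg_equal_zero)
  hence "Im a = 0" using s1 rre rpos by simp
  hence aRe: "a = complex_of_real (Re a)" by (simp add: complex_eq_iff)
  have "complex_of_real (poly (char_poly A) (Re a)) = poly (char_poly Ac) a"
    unfolding Ac_def of_real_hom.char_poly_hom[OF A] using aRe
    by (metis of_real_hom.poly_map_poly)
  also have "\<dots> = 0" by fact
  finally have "poly (char_poly A) (Re a) = 0" by simp
  thus ?thesis using eigenvalue_root_char_poly[OF A] by blast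
qed

lemma index_mult_mat_sum:
  assumes "A \<in> carrier_mat n k" "B \<in> carrier_mat k m" "i < n" "j < m"
  shows "(A * B) $$ (i,j) = (\<Sum>l<k. A $$ (i,l) * B $$ (l,j))"
  using assms by (auto simp: scalar_prod_def lessThan_atLeast0 intro!: sum.cong)

lemma index_mult_mat_vec_sum:
  assumes "A \<in> carrier_mat n k" "v \<in> carrier_vec k" "i < n"
  shows "(A *\<^sub>v v) $ i = (\<Sum>l<k. A $$ (i,l) * v $ l)"
  using assms by (auto simp: mult_mat_vec_def scalar_prod_def lessThan_atLeast0 intro!: sum.cong)

lemma scalar_prod_sum:
  assumes "v \<in> carrier_vec k" "w \<in> carrier_vec k"
  shows "v \<bullet> w = (\<Sum>l<k. v $ l * w $ l)"
  using assms by (auto simp: scalar_prod_def lessThan_atLeast0)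

lemma householder:
  fixes u :: "real vec"
  assumes u: "u \<in> carrier_vec m" and m: "m > 0" and nu: "u \<bullet> u = 1"
  shows "\<exists>H. H \<in> carrier_mat m m \<and> transpose_mat H = H \<and> H * H = 1\<^sub>m m \<and> H *\<^sub>v u = unit_vec m 0"
proof (cases "u = unit_vec m 0")
  case True
  thus ?thesis by (intro exI[of _ "1\<^sub>m m"], auto)
next
  case False
  define e where "e = (unit_vec m 0 :: real vec)"
  define w where "w = u - e"
  have w: "w \<in> carrier_vec m" using u unfolding w_def e_def by auto
  have wi: "w $ i = u $ i - (if i = 0 then 1 else 0)" if "i < m" for i
    using that u unfolding w_def e_def by auto
  have "\<exists>i<m. w $ i \<noteq> 0"
  proof (rule ccontr)
    assume "\<not> ?thesis"
    hence "u = unit_vec m 0" using u wi by (intro eq_vecI, auto)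
    with False show False by simp
  qed
  then obtain i where i: "i < m" "w $ i \<noteq> 0" by blast
  define s where "s = (\<Sum>l<m. w $ l * w $ l)"
  have "w $ i * w $ i > 0" using i(2) not_real_square_gt_zero by blast
  moreover have "w $ i * w $ i \<le> s" unfolding s_def by (rule member_le_sum, insert i, auto)
  ultimately have spos: "s > 0" by linarith
  have uu: "(\<Sum>l<m. u $ l * u $ l) = 1" using nu scalar_prod_sum[OF u u] by simp
  have sum_split: "(\<Sum>l<m. f l) = f 0 + (\<Sum>l\<in>{1..<m}. f l)" for f :: "nat \<Rightarrow> real"
  proof -
    have "{..<m} = insert 0 {1..<m}" using m by auto
    thus ?thesis by simp
  qed
  have s_eq: "s = 2 - 2 * u $ 0"
  proof -
    have "s = (w $ 0 * w $ 0) + (\<Sum>l\<in>{1..<m}. w $ l * w $ l)" unfolding s_def by (rule sum_split)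
    also have "(\<Sum>l\<in>{1..<m}. w $ l * w $ l) = (\<Sum>l\<in>{1..<m}. u $ l * u $ l)"
      by (rule sum.cong, auto simp: wi)
    also have "\<dots> = 1 - u $ 0 * u $ 0" using uu sum_split[of "\<lambda>l. u $ l * u $ l"] by simp
    finally show ?thesis using wi[of 0] m by (simp add: algebra_simps power2_eq_square)
  qed
  have wu: "(\<Sum>l<m. w $ l * u $ l) = 1 - u $ 0"
  proof -
    have "(\<Sum>l<m. w $ l * u $ l) = (w $ 0 * u $ 0) + (\<Sum>l\<in>{1..<m}. w $ l * u $ l)" by (rule sum_split)
    also have "(\<Sum>l\<in>{1..<m}. w $ l * u $ l) = (\<Sum>l\<in>{1..<m}. u $ l * u $ l)"
      by (rule sum.cong, auto simp: wi)
    also have "\<dots> = 1 - u $ 0 * u $ 0" using uu sum_split[of "\<lambda>l. u $ l * u $ l"] by simp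
    finally show ?thesis using wi[of 0] m by (simp add: algebra_simps)
  qed
  define c where "c = 2 / s"
  have cw: "c * (1 - u $ 0) = 1" using spos s_eq unfolding c_def by (simp add: field_simps)
  have cs: "c * c * s = 2 * c" using spos unfolding c_def by (simp add: field_simps)
  define H where "H = mat m m (\<lambda>(i,j). (if i = j then 1 else 0) - c * (w $ i * w $ j))"
  have H: "H \<in> carrier_mat m m" unfolding H_def by auto
  have Hi: "H $$ (i,j) = (if i = j then 1 else 0) - c * (w $ i * w $ j)" if "i < m" "j < m" for i j
    using that unfolding H_def by auto
  show ?thesis
  proof (intro exI[of _ H] conjI H)
    show "transpose_mat H = H" by (rule eq_matI, insert H, auto simp: Hi)
    show "H * H = 1\<^sub>m m"
    proof (rule eq_matI)
      fix i j assume ij: "i < dim_row (1\<^sub>m m)" "j < dim_col (1\<^sub>m m)"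
      hence ij: "i < m" "j < m" by auto
      have "(H * H) $$ (i,j) = (\<Sum>l<m. ((if i = l then 1 else 0) - c * (w $ i * w $ l)) *
           ((if l = j then 1 else 0) - c * (w $ l * w $ j)))"
        using index_mult_mat_sum[OF H H ij] ij by (auto simp: Hi intro!: sum.cong)
      also have "\<dots> = (\<Sum>l<m. (if l = i then (if l = j then 1 else 0) else 0)
          - (if l = i then c * (w $ l * w $ j) else 0)
          - (if l = j then c * (w $ i * w $ l) else 0)
          + c * c * (w $ i * w $ j) * (w $ l * w $ l))"
        by (rule sum.cong, auto simp: algebra_simps)
      also have "\<dots> = (\<Sum>l<m. (if l = i then (if l = j then 1 else 0) else 0))
          - (\<Sum>l<m. (if l = i then c * (w $ l * w $ j) else 0))
          - (\<Sum>l<m. (if l = j then c * (w $ i * w $ l) else 0))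
          + (\<Sum>l<m. c * c * (w $ i * w $ j) * (w $ l * w $ l))"
        by (simp only: sum.distrib sum_subtractf)
      also have "\<dots> = (if i = j then 1 else 0) - c * (w $ i * w $ j) - c * (w $ i * w $ j)
          + c * c * (w $ i * w $ j) * s"
        using ij unfolding s_def by (simp add: sum_distrib_left[symmetric])
      also have "c * c * (w $ i * w $ j) * s = (c * s) * (c * (w $ i * w $ j))" by (simp only: ac_simps)
      also have "c * s = 2" using spos unfolding c_def by simp
      finally show "(H * H) $$ (i,j) = 1\<^sub>m m $$ (i,j)" using ij by simp
    qed (insert H, auto)
    show "H *\<^sub>v u = unit_vec m 0"
    proof (rule eq_vecI)
      fix i assume "i < dim_vec (unit_vec m 0)"
      hence i: "i < m" by simp
      have "(H *\<^sub>v u) $ i = (\<Sum>l<m. ((if i = l then 1 else 0) - c * (w $ i * w $ l)) * u $ l)"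
        using index_mult_mat_vec_sum[OF H u i] i by (auto simp: Hi intro!: sum.cong)
      also have "\<dots> = (\<Sum>l<m. (if l = i then u $ l else 0) - c * w $ i * (w $ l * u $ l))"
        by (rule sum.cong, auto simp: algebra_simps)
      also have "\<dots> = u $ i - c * w $ i * (\<Sum>l<m. w $ l * u $ l)"
        using i by (simp add: sum_subtractf sum_distrib_left)
      also have "\<dots> = u $ i - w $ i" using cw wu by simp
      also have "\<dots> = unit_vec m 0 $ i" using wi[OF i] i by auto
      finally show "(H *\<^sub>v u) $ i = unit_vec m 0 $ i" .
    qed (insert H u, auto)
  qed
qed


lemma real_vec_self_pos:
  fixes v :: "real vec"
  assumes v: "v \<in> carrier_vec m" and nz: "v \<noteq> 0\<^sub>v m"
  shows "v \<bullet> v > 0"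
proof -
  obtain i where i: "i < m" "v $ i \<noteq> 0" using v nz by (metis eq_vecI carrier_vecD index_zero_vec(1,2))
  have "v $ i * v $ i > 0" using i(2) not_real_square_gt_zero by blast
  moreover have "v $ i * v $ i \<le> (\<Sum>l<m. v $ l * v $ l)" by (rule member_le_sum, insert i, auto)
  ultimately show ?thesis using scalar_prod_sum[OF v v] by linarith
qed

lemma spectral_real_sym:
  fixes A :: "real mat"
  assumes "A \<in> carrier_mat n n" "transpose_mat A = A"
  shows "\<exists>Q. Q \<in> carrier_mat n n \<and> transpose_mat Q * Q = 1\<^sub>m n \<and> diagonal_mat (transpose_mat Q * A * Q)"
  using assms
proof (induction n arbitrary: A)
  case 0
  show ?case by (intro exI[of _ "1\<^sub>m 0"], auto simp: diagonal_mat_def)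
next
  case (Suc n A)
  have A: "A \<in> carrier_mat (Suc n) (Suc n)" by fact
  have symA: "transpose_mat A = A" by fact
  have symE: "A $$ (i,j) = A $$ (j,i)" if "i < Suc n" "j < Suc n" for i j
    using arg_cong[OF symA, of "\<lambda>M. M $$ (j,i)"] that A by auto
  obtain l where "eigenvalue A l" using sym_real_eigenvalue[OF A symE] by auto
  then obtain v where ev: "eigenvector A v l" unfolding eigenvalue_def by auto
  hence v: "v \<in> carrier_vec (Suc n)" "v \<noteq> 0\<^sub>v (Suc n)" "A *\<^sub>v v = l \<cdot>\<^sub>v v"
    using A unfolding eigenvector_def by auto
  have vpos: "v \<bullet> v > 0" by (rule real_vec_self_pos[OF v(1,2)])
  define u where "u = (1 / sqrt (v \<bullet> v)) \<cdot>\<^sub>v v"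
  have u: "u \<in> carrier_vec (Suc n)" unfolding u_def using v by auto
  have uu: "u \<bullet> u = 1" unfolding u_def using v(1) vpos
    by (simp add: real_sqrt_mult[symmetric])
  have Au: "A *\<^sub>v u = l \<cdot>\<^sub>v u" unfolding u_def using mult_mat_vec[OF A v(1)] v(3) v(1)
    by (auto simp: smult_smult_assoc mult.commute)
  obtain H where H: "H \<in> carrier_mat (Suc n) (Suc n)" and Hs: "transpose_mat H = H"
    and HH: "H * H = 1\<^sub>m (Suc n)" and Hu: "H *\<^sub>v u = unit_vec (Suc n) 0"
    using householder[OF u _ uu] by auto
  define e where "e = (unit_vec (Suc n) 0 :: real vec)"
  have e: "e \<in> carrier_vec (Suc n)" unfolding e_def by auto
  have He: "H *\<^sub>v e = u"
  proof -
    have "H *\<^sub>v e = H *\<^sub>v (H *\<^sub>v u)" using Hu unfolding e_def by simp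
    also have "\<dots> = (H * H) *\<^sub>v u" using H u by simp
    also have "\<dots> = u" using HH u by simp
    finally show ?thesis .
  qed
  define A' where "A' = H * A * H"
  have A': "A' \<in> carrier_mat (Suc n) (Suc n)" unfolding A'_def using H A by auto
  have symA': "transpose_mat A' = A'"
  proof -
    have "transpose_mat A' = transpose_mat H * transpose_mat (H * A)"
      unfolding A'_def by (rule transpose_mult[of _ "Suc n" "Suc n"], insert H A, auto)
    also have "transpose_mat (H * A) = transpose_mat A * transpose_mat H"
      by (rule transpose_mult[of _ "Suc n" "Suc n"], insert H A, auto)
    finally show ?thesis unfolding A'_def Hs symA using H A by simp
  qed
  have A'e: "A' *\<^sub>v e = l \<cdot>\<^sub>v e"
  proof -
    have HA: "H * A \<in> carrier_mat (Suc n) (Suc n)" using H A by auto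
    have "A' *\<^sub>v e = (H * A) *\<^sub>v (H *\<^sub>v e)" unfolding A'_def by (rule assoc_mult_mat_vec[OF HA H e])
    also have "\<dots> = H *\<^sub>v (A *\<^sub>v (H *\<^sub>v e))" by (rule assoc_mult_mat_vec[OF H A], insert H e, auto)
    finally have "A' *\<^sub>v e = H *\<^sub>v (A *\<^sub>v (H *\<^sub>v e))" .
    also have "\<dots> = l \<cdot>\<^sub>v (H *\<^sub>v u)" unfolding He Au using mult_mat_vec[OF H u] by simp
    finally show ?thesis unfolding Hu e_def .
  qed
  have col0: "A' $$ (i,0) = (if i = 0 then l else 0)" if i: "i < Suc n" for i
  proof -
    have "(A' *\<^sub>v e) $ i = (\<Sum>k<Suc n. A' $$ (i,k) * e $ k)" by (rule index_mult_mat_vec_sum[OF A' e i])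
    also have "\<dots> = (\<Sum>k<Suc n. if k = 0 then A' $$ (i,k) else 0)" by (rule sum.cong, auto simp: e_def)
    also have "\<dots> = A' $$ (i,0)" by simp
    finally show ?thesis using A'e i unfolding e_def by auto
  qed
  have symE': "A' $$ (i,j) = A' $$ (j,i)" if "i < Suc n" "j < Suc n" for i j
    using arg_cong[OF symA', of "\<lambda>M. M $$ (j,i)"] that A' by auto
  define A3 where "A3 = mat n n (\<lambda>(i,j). A' $$ (Suc i, Suc j))"
  have A3: "A3 \<in> carrier_mat n n" unfolding A3_def by auto
  have symA3: "transpose_mat A3 = A3" unfolding A3_def by (rule eq_matI, auto simp: symE')
  obtain Q3 where Q3: "Q3 \<in> carrier_mat n n" and Q3o: "transpose_mat Q3 * Q3 = 1\<^sub>m n"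
    and Q3d: "diagonal_mat (transpose_mat Q3 * A3 * Q3)" using Suc.IH[OF A3 symA3] by auto
  define A1 where "A1 = mat 1 1 (\<lambda>_. l)"
  have A1: "A1 \<in> carrier_mat 1 1" unfolding A1_def by auto
  have A'b: "A' = four_block_mat A1 (0\<^sub>m 1 n) (0\<^sub>m n 1) A3"
    by (rule eq_matI, insert A' col0 symE', auto simp: A1_def A3_def)
  define B where "B = four_block_mat (1\<^sub>m 1) (0\<^sub>m 1 n) (0\<^sub>m n 1) Q3"
  have B: "B \<in> carrier_mat (Suc n) (Suc n)" unfolding B_def using Q3 by auto
  have BT: "transpose_mat B = four_block_mat (1\<^sub>m 1) (0\<^sub>m 1 n) (0\<^sub>m n 1) (transpose_mat Q3)"
    unfolding B_def by (subst transpose_four_block_mat, insert Q3, auto)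
  have BTB: "transpose_mat B * B = 1\<^sub>m (Suc n)"
    unfolding BT unfolding B_def
    by (subst mult_four_block_mat, insert Q3 Q3o, auto)
  define Q where "Q = H * B"
  have Q: "Q \<in> carrier_mat (Suc n) (Suc n)" unfolding Q_def using H B by auto
  have QT: "transpose_mat Q = transpose_mat B * H"
    unfolding Q_def by (subst transpose_mult[of _ "Suc n" "Suc n"], insert H B Hs, auto)
  have BT': "transpose_mat B \<in> carrier_mat (Suc n) (Suc n)" using B by auto
  have "transpose_mat Q * Q = (transpose_mat B * H) * (H * B)" unfolding QT by (simp add: Q_def)
  also have "\<dots> = transpose_mat B * (H * (H * B))" by (rule assoc_mult_mat[OF BT' H], insert H B, auto)
  also have "H * (H * B) = (H * H) * B" by (rule assoc_mult_mat[symmetric, OF H H B])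
  also have "transpose_mat B * ((H * H) * B) = 1\<^sub>m (Suc n)" using HH BTB B by simp
  finally have QQ: "transpose_mat Q * Q = 1\<^sub>m (Suc n)" .
  have "transpose_mat Q * A * Q = ((transpose_mat B * H) * A) * (H * B)" unfolding QT by (simp add: Q_def)
  also have "\<dots> = transpose_mat B * (H * A * H) * B"
    using BT' H A B by (simp add: assoc_mult_mat[of _ "Suc n" "Suc n" _ "Suc n" _ "Suc n"])
  also have "\<dots> = transpose_mat B * A' * B" unfolding A'_def ..
  also have "transpose_mat B * A' = four_block_mat A1 (0\<^sub>m 1 n) (0\<^sub>m n 1) (transpose_mat Q3 * A3)"
    unfolding BT A'b
    by (subst mult_four_block_mat, insert Q3 A3 A1, auto)
  also have "four_block_mat A1 (0\<^sub>m 1 n) (0\<^sub>m n 1) (transpose_mat Q3 * A3) * B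
     = four_block_mat A1 (0\<^sub>m 1 n) (0\<^sub>m n 1) (transpose_mat Q3 * A3 * Q3)"
    unfolding B_def
    by (subst mult_four_block_mat, insert Q3 A3 A1, auto)
  finally have D: "transpose_mat Q * A * Q = four_block_mat A1 (0\<^sub>m 1 n) (0\<^sub>m n 1) (transpose_mat Q3 * A3 * Q3)" .
  have "diagonal_mat (transpose_mat Q * A * Q)"
    unfolding D using Q3d Q3 A3 unfolding diagonal_mat_def by (auto simp: A1_def)
  thus ?case using Q QQ by blast
qed


lemma sort_second_le:
  fixes ds :: "real list"
  assumes j: "j < length ds" and k: "k < length ds" and jk: "j \<noteq> k" and dj: "ds ! j \<le> c" and dk: "ds ! k \<le> c"
  shows "sort ds ! 1 \<le> c"
proof (rule ccontr)
  assume nc: "\<not> ?thesis"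
  let ?s = "sort ds"
  let ?P = "\<lambda>x. x \<le> c"
  have len: "length ?s = length ds" by simp
  have len2: "length ds \<ge> 2" using j k jk by linarith
  have srt: "sorted ?s" by simp
  have big: "?s ! i > c" if "1 \<le> i" "i < length ?s" for i
    using sorted_nth_mono[OF srt that] nc by linarith
  have "{i. i < length ?s \<and> ?P (?s ! i)} \<subseteq> {0}"
  proof
    fix i assume "i \<in> {i. i < length ?s \<and> ?P (?s ! i)}"
    hence i: "i < length ?s" "?s ! i \<le> c" by auto
    show "i \<in> {0}"
    proof (rule ccontr)
      assume "i \<notin> {0}"
      hence "1 \<le> i" by auto
      with big[OF this i(1)] i(2) show False by linarith
    qed
  qed
  hence "card {i. i < length ?s \<and> ?P (?s ! i)} \<le> 1" using card_mono[of "{0::nat}"] by fastforce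
  hence c1: "length (filter ?P ?s) \<le> 1" by (simp add: length_filter_conv_card)
  have "length (filter ?P ?s) = length (filter ?P ds)"
    by (metis mset_filter mset_sort size_mset)
  moreover have "{j, k} \<subseteq> {i. i < length ds \<and> ?P (ds ! i)}" using j k dj dk by auto
  hence "card {j, k} \<le> card {i. i < length ds \<and> ?P (ds ! i)}" by (intro card_mono, auto)
  hence "length (filter ?P ds) \<ge> 2" using jk by (simp add: length_filter_conv_card)
  ultimately show False using c1 by linarith
qed

lemma proots_prod_linear: "proots (\<Prod>a\<leftarrow>as. [:- a, 1:]) = mset (as :: real list)"
proof (induct as)
  case (Cons a as)
  have z0: "0 \<notin> (\<lambda>a. [:- a, 1:]) ` set (as :: real list)"
  proof
    assume "0 \<in> (\<lambda>a. [:- a, 1:]) ` set as"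
    then obtain b where "0 = [:- b, 1 :: real:]" by auto
    thus False by (metis one_neq_zero pCons_eq_0_iff)
  qed
  have nz: "(\<Prod>a\<leftarrow>as. [:- a, 1:]) \<noteq> (0 :: real poly)"
    using z0 by (simp add: prod_list_zero_iff)
  have nz1: "[:- a, 1:] \<noteq> (0 :: real poly)" by auto
  have "proots (\<Prod>a\<leftarrow>a # as. [:- a, 1:]) = proots ([:- a, 1:] * (\<Prod>a\<leftarrow>as. [:- a, 1:]))"
    by (simp only: list.map prod_list.Cons)
  also have "\<dots> = proots [:- a, 1:] + proots (\<Prod>a\<leftarrow>as. [:- a, 1:])"
    by (rule proots_mult, insert nz nz1, auto)
  also have "\<dots> = add_mset a (mset as)" using Cons by simp
  finally show ?case by simp
qed simp

lemma second_eig_bound: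
  fixes A :: "real mat" and x :: "real vec" and c :: real
  assumes A: "A \<in> carrier_mat n n" and sym: "transpose_mat A = A"
    and A1: "A *\<^sub>v vec n (\<lambda>_. 1) = 0\<^sub>v n"
    and x: "x \<in> carrier_vec n" and xnz: "x \<noteq> 0\<^sub>v n" and x1: "x \<bullet> vec n (\<lambda>_. 1) = 0"
    and xAx: "x \<bullet> (A *\<^sub>v x) \<le> c * (x \<bullet> x)" and c: "c \<ge> 0"
  shows "sorted_list_of_multiset (proots (char_poly A)) ! 1 \<le> c"
proof -
  obtain Q where Q: "Q \<in> carrier_mat n n" and QQ: "transpose_mat Q * Q = 1\<^sub>m n"
    and Dd: "diagonal_mat (transpose_mat Q * A * Q)" using spectral_real_sym[OF A sym] by auto
  define D where "D = transpose_mat Q * A * Q"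
  have QT: "transpose_mat Q \<in> carrier_mat n n" using Q by auto
  have D: "D \<in> carrier_mat n n" unfolding D_def using Q A by auto
  have QQ': "Q * transpose_mat Q = 1\<^sub>m n" by (rule mat_mult_left_right_inverse[OF QT Q QQ])
  have AD: "A = Q * D * transpose_mat Q"
  proof -
    have "Q * D * transpose_mat Q = (Q * transpose_mat Q) * A * (Q * transpose_mat Q)"
      unfolding D_def using Q QT A by (simp add: assoc_mult_mat[of _ n n _ n _ n])
    thus ?thesis using QQ' A by simp
  qed
  have sim: "similar_mat A D"
    by (rule similar_matI[where n=n and P=Q and Q="transpose_mat Q"], insert A D Q QT QQ QQ' AD, auto)
  have DdD: "diagonal_mat D" using Dd unfolding D_def .
  have ut: "upper_triangular D" using DdD D unfolding diagonal_mat_def upper_triangular_def by auto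
  define ds where "ds = diag_mat D"
  have lds: "length ds = n" unfolding ds_def diag_mat_def using D by simp
  have dsi: "ds ! i = D $$ (i,i)" if "i < n" for i unfolding ds_def diag_mat_def using D that by simp
  have "char_poly A = (\<Prod>a\<leftarrow>ds. [:- a, 1:])"
    unfolding char_poly_similar[OF sim] ds_def by (rule char_poly_upper_triangular[OF D ut])
  hence roots: "sorted_list_of_multiset (proots (char_poly A)) = sort ds"
    by (simp add: proots_prod_linear)
  define one where "one = (vec n (\<lambda>_. 1) :: real vec)"
  have one: "one \<in> carrier_vec n" unfolding one_def by auto
  have Dv: "(D *\<^sub>v y) $ i = D $$ (i,i) * y $ i" if y: "y \<in> carrier_vec n" and i: "i < n" for y i
  proof -
    have "(D *\<^sub>v y) $ i = (\<Sum>l<n. D $$ (i,l) * y $ l)" by (rule index_mult_mat_vec_sum[OF D y i])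
    also have "\<dots> = (\<Sum>l<n. if l = i then D $$ (i,l) * y $ l else 0)"
      by (rule sum.cong, insert DdD D i, auto simp: diagonal_mat_def)
    finally show ?thesis using i by simp
  qed
  have quad: "z \<bullet> (A *\<^sub>v z) = (\<Sum>i<n. D $$ (i,i) * ((transpose_mat Q *\<^sub>v z) $ i)^2)"
    and norm: "z \<bullet> z = (\<Sum>i<n. ((transpose_mat Q *\<^sub>v z) $ i)^2)" if z: "z \<in> carrier_vec n" for z
  proof -
    define y where "y = transpose_mat Q *\<^sub>v z"
    have y: "y \<in> carrier_vec n" unfolding y_def using QT z by auto
    have "A *\<^sub>v z = Q *\<^sub>v (D *\<^sub>v y)" unfolding AD y_def using Q D QT z
      by (simp add: assoc_mult_mat_vec[of _ n n _ n])
    hence "z \<bullet> (A *\<^sub>v z) = y \<bullet> (D *\<^sub>v y)"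
      using transpose_vec_mult_scalar[OF Q _ z, of "D *\<^sub>v y"] D y unfolding y_def
      by (metis comm_scalar_prod mult_mat_vec_carrier QT)
    also have "\<dots> = (\<Sum>i<n. y $ i * (D $$ (i,i) * y $ i))"
      using scalar_prod_sum[OF y, of "D *\<^sub>v y"] D y Dv[OF y] by simp
    finally show "z \<bullet> (A *\<^sub>v z) = (\<Sum>i<n. D $$ (i,i) * ((transpose_mat Q *\<^sub>v z) $ i)^2)"
      unfolding y_def by (simp add: power2_eq_square ac_simps)
    have "z \<bullet> z = z \<bullet> ((Q * transpose_mat Q) *\<^sub>v z)" using QQ' z by simp
    also have "\<dots> = z \<bullet> (Q *\<^sub>v y)" unfolding y_def using Q QT z by simp
    also have "\<dots> = y \<bullet> y" using transpose_vec_mult_scalar[OF Q y z] unfolding y_def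
      by (metis comm_scalar_prod mult_mat_vec_carrier QT z)
    finally show "z \<bullet> z = (\<Sum>i<n. ((transpose_mat Q *\<^sub>v z) $ i)^2)"
      using scalar_prod_sum[OF y y] unfolding y_def by (simp add: power2_eq_square)
  qed
  have n0: "n > 0" using x xnz by (metis carrier_vecD eq_vecI gr0I index_zero_vec(2) less_nat_zero_code)
  obtain k where k: "k < n" and kmin: "\<And>i. i < n \<Longrightarrow> D $$ (k,k) \<le> D $$ (i,i)"
  proof -
    have "finite ((\<lambda>i. D $$ (i,i)) ` {..<n})" "(\<lambda>i. D $$ (i,i)) ` {..<n} \<noteq> {}" using n0 by auto
    then obtain k where "k < n" "D $$ (k,k) = Min ((\<lambda>i. D $$ (i,i)) ` {..<n})"
      by (metis (no_types, lifting) Min_in imageE lessThan_iff)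
    thus ?thesis using that by (metis (no_types, lifting) Min_le finite_imageI finite_lessThan image_eqI lessThan_iff)
  qed
  have "\<exists>z. z \<in> carrier_vec n \<and> z \<bullet> z > 0 \<and> (transpose_mat Q *\<^sub>v z) $ k = 0 \<and> z \<bullet> (A *\<^sub>v z) \<le> c * (z \<bullet> z)"
  proof (cases "(transpose_mat Q *\<^sub>v x) $ k = 0")
    case True
    thus ?thesis using x xAx real_vec_self_pos[OF x xnz] by blast
  next
    case False
    define p where "p = (transpose_mat Q *\<^sub>v x) $ k"
    define q where "q = (transpose_mat Q *\<^sub>v one) $ k"
    define z where "z = q \<cdot>\<^sub>v x - p \<cdot>\<^sub>v one"
    have z: "z \<in> carrier_vec n" unfolding z_def using x one by auto
    have Qz: "(transpose_mat Q *\<^sub>v z) $ k = 0"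
    proof -
      have "transpose_mat Q *\<^sub>v z = q \<cdot>\<^sub>v (transpose_mat Q *\<^sub>v x) - p \<cdot>\<^sub>v (transpose_mat Q *\<^sub>v one)"
        unfolding z_def using QT x one by (simp add: mult_minus_distrib_mat_vec mult_mat_vec)
      thus ?thesis using k QT unfolding p_def q_def by simp
    qed
    have x1': "one \<bullet> x = 0" using x1 comm_scalar_prod[OF one x] unfolding one_def by simp
    have oo: "one \<bullet> one = real n" unfolding one_def by (simp add: scalar_prod_def)
    have zz: "z \<bullet> z = q^2 * (x \<bullet> x) + p^2 * real n"
      unfolding z_def using x one x1 x1' oo
      by (simp add: minus_scalar_prod_distrib scalar_prod_minus_distrib one_def power2_eq_square algebra_simps)
    have Az: "A *\<^sub>v z = q \<cdot>\<^sub>v (A *\<^sub>v x)"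
    proof -
      have "A *\<^sub>v z = q \<cdot>\<^sub>v (A *\<^sub>v x) - p \<cdot>\<^sub>v 0\<^sub>v n"
        unfolding z_def using A x one A1 by (simp add: mult_minus_distrib_mat_vec mult_mat_vec one_def)
      also have "\<dots> = q \<cdot>\<^sub>v (A *\<^sub>v x)" using A x by (intro eq_vecI, auto)
      finally show ?thesis .
    qed
    have oAx: "one \<bullet> (A *\<^sub>v x) = 0"
    proof -
      have "one \<bullet> (A *\<^sub>v x) = (transpose_mat A *\<^sub>v one) \<bullet> x"
        using transpose_vec_mult_scalar[OF A x one] by simp
      also have "\<dots> = 0" using sym A1 x unfolding one_def by simp
      finally show ?thesis .
    qed
    have zAz: "z \<bullet> (A *\<^sub>v z) = q^2 * (x \<bullet> (A *\<^sub>v x))"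
      unfolding Az unfolding z_def using x one A oAx
      by (simp add: minus_scalar_prod_distrib power2_eq_square)
    have "z \<bullet> (A *\<^sub>v z) \<le> q^2 * (c * (x \<bullet> x))" unfolding zAz
      by (rule mult_left_mono[OF xAx], simp)
    also have "\<dots> \<le> c * (z \<bullet> z)" unfolding zz using c
      by (simp add: algebra_simps)
    finally have le: "z \<bullet> (A *\<^sub>v z) \<le> c * (z \<bullet> z)" .
    have "p^2 * real n > 0" using False n0 unfolding p_def by simp
    moreover have "q^2 * (x \<bullet> x) \<ge> 0" using real_vec_self_pos[OF x xnz] by simp
    ultimately have "z \<bullet> z > 0" unfolding zz by linarith
    thus ?thesis using z Qz le by blast
  qed
  then obtain z where z: "z \<in> carrier_vec n" and zpos: "z \<bullet> z > 0"
    and zk: "(transpose_mat Q *\<^sub>v z) $ k = 0" and zle: "z \<bullet> (A *\<^sub>v z) \<le> c * (z \<bullet> z)" by blast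
  define y where "y = transpose_mat Q *\<^sub>v z"
  have "\<exists>j<n. j \<noteq> k \<and> D $$ (j,j) \<le> c"
  proof (rule ccontr)
    assume "\<not> ?thesis"
    hence gt: "\<And>j. j < n \<Longrightarrow> j \<noteq> k \<Longrightarrow> D $$ (j,j) > c" by force
    have "(\<Sum>i<n. c * (y $ i)^2) < (\<Sum>i<n. D $$ (i,i) * (y $ i)^2)"
    proof -
      from zpos have "(\<Sum>i<n. (y $ i)^2) > 0" using norm[OF z] unfolding y_def by simp
      then obtain j where j: "j < n" "(y $ j)^2 > 0"
        by (metis (no_types, lifting) lessThan_iff not_less sum_nonpos)
      have jk: "j \<noteq> k" using j zk unfolding y_def by auto
      show ?thesis
      proof (rule sum_strict_mono_ex1)
        show "\<forall>i\<in>{..<n}. c * (y $ i)^2 \<le> D $$ (i,i) * (y $ i)^2"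
        proof
          fix i assume "i \<in> {..<n}"
          thus "c * (y $ i)^2 \<le> D $$ (i,i) * (y $ i)^2"
            using gt[of i] zk unfolding y_def by (cases "i = k", auto intro: mult_right_mono)
        qed
        show "\<exists>i\<in>{..<n}. c * (y $ i)^2 < D $$ (i,i) * (y $ i)^2"
          using j jk gt[of j] by (intro bexI[of _ j], auto)
      qed simp
    qed
    also have "\<dots> = z \<bullet> (A *\<^sub>v z)" using quad[OF z] unfolding y_def by simp
    also have "\<dots> \<le> c * (z \<bullet> z)" by fact
    also have "\<dots> = (\<Sum>i<n. c * (y $ i)^2)" using norm[OF z] unfolding y_def by (simp add: sum_distrib_left)
    finally show False by simp
  qed
  then obtain j where j: "j < n" "j \<noteq> k" "D $$ (j,j) \<le> c" by blast
  have "D $$ (k,k) \<le> c" using kmin[OF j(1)] j(3) by linarith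
  hence "sort ds ! 1 \<le> c" using sort_second_le[of j ds k c] j k lds dsi by auto
  thus ?thesis unfolding roots .
qed


lemma sum_indicator_card:
  "(\<Sum>j<(n::nat). if P j then (1::real) else 0) = real (card {j. j < n \<and> P j})"
proof -
  have "(\<Sum>j<n. if P j then (1::real) else 0) = (\<Sum>j\<in>{j. j < n \<and> P j}. 1)"
    by (rule sum.mono_neutral_cong_right, auto)
  thus ?thesis by simp
qed

lemma algebraic_connectivity_le:
  fixes F :: "nat \<Rightarrow> nat \<Rightarrow> bool" and x :: "nat \<Rightarrow> real" and c :: real
  assumes sg: "simple_graph n F"
    and xs: "(\<Sum>i<n. x i) = 0" and xnz: "\<exists>i<n. x i \<noteq> 0"
    and en: "(\<Sum>i<n. \<Sum>j<n. if F i j then (x i - x j)^2 else 0) \<le> 2 * c * (\<Sum>i<n. (x i)^2)"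
    and c: "c \<ge> 0"
  shows "algebraic_connectivity n F \<le> c"
proof -
  have Fsym: "F i j = F j i" for i j using sg unfolding simple_graph_def by blast
  have Firr: "\<not> F i i" for i using sg unfolding simple_graph_def by blast
  define L where "L = laplacian n F"
  have L: "L \<in> carrier_mat n n" unfolding L_def laplacian_def by auto
  have Li: "L $$ (i,j) = (if i = j then real (degree n F i) else 0) - (if F i j then 1 else 0)"
    if "i < n" "j < n" for i j using that Firr unfolding L_def laplacian_def by auto
  have deg: "real (degree n F i) = (\<Sum>j<n. if F i j then 1 else 0)" for i
    unfolding degree_def by (simp add: sum_indicator_card)
  have symL: "transpose_mat L = L" by (rule eq_matI, insert L, auto simp: Li Fsym)
  define one where "one = (vec n (\<lambda>_. 1) :: real vec)"
  have L1: "L *\<^sub>v one = 0\<^sub>v n"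
  proof (rule eq_vecI)
    fix i assume "i < dim_vec (0\<^sub>v n :: real vec)"
    hence i: "i < n" by simp
    have "(L *\<^sub>v one) $ i = (\<Sum>j<n. L $$ (i,j) * one $ j)"
      by (rule index_mult_mat_vec_sum[OF L _ i], auto simp: one_def)
    also have "\<dots> = (\<Sum>j<n. (if j = i then real (degree n F i) else 0) - (if F i j then 1 else 0))"
      by (rule sum.cong, auto simp: Li i one_def)
    also have "\<dots> = 0" using i by (simp add: sum_subtractf deg)
    finally show "(L *\<^sub>v one) $ i = 0\<^sub>v n $ i" using i by simp
  qed (insert L, auto simp: one_def)
  define v where "v = vec n x"
  have v: "v \<in> carrier_vec n" unfolding v_def by auto
  have vnz: "v \<noteq> 0\<^sub>v n" using xnz unfolding v_def by (metis index_vec index_zero_vec(1))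
  have v1: "v \<bullet> one = 0" using xs unfolding v_def one_def by (simp add: scalar_prod_def lessThan_atLeast0)
  have vv: "v \<bullet> v = (\<Sum>i<n. (x i)^2)" unfolding v_def by (simp add: scalar_prod_def lessThan_atLeast0 power2_eq_square)
  have vLv: "v \<bullet> (L *\<^sub>v v) = (\<Sum>i<n. \<Sum>j<n. if F i j then (x i - x j)^2 else 0) / 2"
  proof -
    have "v \<bullet> (L *\<^sub>v v) = (\<Sum>i<n. x i * (\<Sum>j<n. L $$ (i,j) * x j))"
      using scalar_prod_sum[OF v, of "L *\<^sub>v v"] L v index_mult_mat_vec_sum[OF L v]
      unfolding v_def by simp
    also have "\<dots> = (\<Sum>i<n. \<Sum>j<n. if F i j then x i * x i - x i * x j else 0)"
    proof (rule sum.cong[OF refl])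
      fix i assume "i \<in> {..<n}"
      hence i: "i < n" by simp
      have "(\<Sum>j<n. L $$ (i,j) * x j) = (\<Sum>j<n. (if j = i then real (degree n F i) * x j else 0) - (if F i j then x j else 0))"
        by (rule sum.cong, auto simp: Li i algebra_simps)
      also have "\<dots> = real (degree n F i) * x i - (\<Sum>j<n. if F i j then x j else 0)"
        using i by (simp add: sum_subtractf)
      finally have sA: "(\<Sum>j<n. L $$ (i,j) * x j) = real (degree n F i) * x i - (\<Sum>j<n. if F i j then x j else 0)" .
      have s1: "x i * (\<Sum>j<n. L $$ (i,j) * x j) = real (degree n F i) * (x i * x i) - x i * (\<Sum>j<n. if F i j then x j else 0)"
        unfolding sA by (simp add: algebra_simps)
      have s2: "real (degree n F i) * (x i * x i) = (\<Sum>j<n. if F i j then x i * x i else 0)"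
        unfolding deg sum_distrib_right by (rule sum.cong, auto)
      have s3: "x i * (\<Sum>j<n. if F i j then x j else 0) = (\<Sum>j<n. if F i j then x i * x j else 0)"
        unfolding sum_distrib_left by (rule sum.cong, auto)
      show "x i * (\<Sum>j<n. L $$ (i,j) * x j) = (\<Sum>j<n. if F i j then x i * x i - x i * x j else 0)"
        unfolding s1 s2 s3 sum_subtractf[symmetric] by (rule sum.cong, auto)
    qed
    finally have e1: "v \<bullet> (L *\<^sub>v v) = (\<Sum>i<n. \<Sum>j<n. if F i j then x i * x i - x i * x j else 0)" .
    have "(\<Sum>i<n. \<Sum>j<n. if F i j then x i * x i - x i * x j else 0)
        = (\<Sum>j<n. \<Sum>i<n. if F i j then x i * x i - x i * x j else 0)" by (rule sum.swap)
    also have "\<dots> = (\<Sum>i<n. \<Sum>j<n. if F i j then x j * x j - x j * x i else 0)"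
      by (simp add: Fsym)
    finally have e2: "v \<bullet> (L *\<^sub>v v) = (\<Sum>i<n. \<Sum>j<n. if F i j then x j * x j - x j * x i else 0)" using e1 by simp
    have "2 * (v \<bullet> (L *\<^sub>v v)) = (\<Sum>i<n. \<Sum>j<n. if F i j then x i * x i - x i * x j else 0)
          + (\<Sum>i<n. \<Sum>j<n. if F i j then x j * x j - x j * x i else 0)" using e1 e2 by simp
    also have "\<dots> = (\<Sum>i<n. \<Sum>j<n. (if F i j then x i * x i - x i * x j else 0) + (if F i j then x j * x j - x j * x i else 0))"
      by (simp add: sum.distrib)
    also have "\<dots> = (\<Sum>i<n. \<Sum>j<n. if F i j then (x i - x j)^2 else 0)"
      by (intro sum.cong refl, auto simp: power2_eq_square algebra_simps)
    finally show ?thesis by simp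
  qed
  have "v \<bullet> (L *\<^sub>v v) \<le> c * (v \<bullet> v)" unfolding vLv vv using en by simp
  from second_eig_bound[OF L symL L1[unfolded one_def] v vnz v1[unfolded one_def] this c]
  show ?thesis unfolding algebraic_connectivity_def laplacian_eigenvalues_def L_def .
qed

definition gad :: "nat \<Rightarrow> nat list list" where
 "gad r = (if r = 5 then [[1,2,3,4],[0,2,3,4],[0,1,3,4],[0,1,2,5],[0,1,2,5]]
   else if r = 6 then [[1,2,3,5],[0,2,3,5],[0,1,3,4],[0,1,2,4],[2,3,5,6],[0,1,4,6]]
   else [[1,2,3,4],[0,2,3,4],[0,1,3,6],[0,1,2,5],[0,1,5,6],[3,4,6,7],[2,4,5,7]])"

definition midnb :: "nat \<Rightarrow> nat \<Rightarrow> nat list" where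
 "midnb t i = (if t = 0 then [i-2,i-1,i+1,i+2] else if t = 1 then [i-1,i+1,i+2,i+3]
    else if t = 4 then [i-3,i-2,i-1,i+1] else [i-2,i-1,i+1,i+2])"

definition nb :: "nat \<Rightarrow> nat \<Rightarrow> nat \<Rightarrow> nat \<Rightarrow> nat list" where
 "nb r1 r2 n i = (if i < r1 then gad r1 ! i
    else if n - r2 \<le> i then map (\<lambda>b. n - 1 - b) (gad r2 ! (n - 1 - i))
    else midnb ((i - r1) mod 5) i)"

definition nbok :: "nat \<Rightarrow> nat \<Rightarrow> nat \<Rightarrow> nat \<Rightarrow> bool" where
  "nbok r1 r2 n i \<longleftrightarrow> set (nb r1 r2 n i) \<subseteq> {..<n} \<and> i \<notin> set (nb r1 r2 n i)
    \<and> distinct (nb r1 r2 n i) \<and> length (nb r1 r2 n i) = 4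
    \<and> (\<forall>j\<in>set (nb r1 r2 n i). i \<in> set (nb r1 r2 n j))
    \<and> (0 < i \<longrightarrow> (\<exists>j\<in>set (nb r1 r2 n i). j < i))"

lemma lt7: "(i::nat) < 7 \<Longrightarrow> i = 0 \<or> i = 1 \<or> i = 2 \<or> i = 3 \<or> i = 4 \<or> i = 5 \<or> i = 6" by arith

lemma left_region:
  assumes r1: "r1 \<in> {5,6,7}" and r2: "r2 \<in> {5,6,7}" and n: "n = r1 + r2 + 1 + 5*k" and i: "i < r1"
  shows "nbok r1 r2 n i"
proof -
  have "i < 7" using i r1 by auto
  from lt7[OF this] r1 r2 i show ?thesis
    unfolding nbok_def n
    by (elim disjE insertE emptyE; simp add: nb_def gad_def midnb_def)
qed

lemma right_region:
  assumes r1: "r1 \<in> {5,6,7}" and r2: "r2 \<in> {5,6,7}" and n: "n = r1 + r2 + 1 + 5*k" and a: "a < r2"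
  shows "nbok r1 r2 n (n - 1 - a)"
proof -
  have "a < 7" using a r2 by auto
  from lt7[OF this] r1 r2 a show ?thesis
    unfolding nbok_def n
    by (elim disjE insertE emptyE; simp add: nb_def gad_def midnb_def)
qed

lemma lt5: "(t::nat) < 5 \<Longrightarrow> t = 0 \<or> t = 1 \<or> t = 2 \<or> t = 3 \<or> t = 4" by arith

lemma mid_region:
  assumes r1: "r1 \<in> {5,6,7}" and r2: "r2 \<in> {5,6,7}" and n: "n = r1 + r2 + 1 + 5*k"
    and i1: "r1 \<le> i" and i2: "i < n - r2"
  shows "nbok r1 r2 n i"
proof -
  define q where "q = (i - r1) div 5"
  define t where "t = (i - r1) mod 5"
  have it: "i = r1 + 5 * q + t" unfolding q_def t_def using i1 by simp
  have t5: "t < 5" unfolding t_def by simp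
  have "5 * q + t \<le> 5 * k" using i2 it n by simp
  hence qk: "q \<le> k" and tk: "t > 0 \<Longrightarrow> q < k" by auto
  obtain m where km: "k = q + m" using qk le_Suc_ex by blast
  have tm: "t > 0 \<Longrightarrow> m > 0" using tk km by simp
  have qc: "q = 0 \<or> (\<exists>q'. q = Suc q')" by (cases q, auto)
  have mc: "m = 0 \<or> (\<exists>m'. m = Suc m')" by (cases m, auto)
  from lt5[OF t5] qc mc r1 r2 tm show ?thesis
    unfolding nbok_def n it km
    by (elim disjE insertE emptyE exE; simp add: nb_def gad_def midnb_def)
qed

definition Dv :: "nat \<Rightarrow> nat \<Rightarrow> nat \<Rightarrow> nat \<Rightarrow> int" where
  "Dv r1 r2 n i = (\<Sum>j\<leftarrow>nb r1 r2 n i. (int i - int j)^2)"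

lemma left_region_D:
  assumes r1: "r1 \<in> {5,6,7}" and r2: "r2 \<in> {5,6,7}" and n: "n = r1 + r2 + 1 + 5*k" and i: "i < r1"
  shows "Dv r1 r2 n i \<le> 43"
proof -
  have "i < 7" using i r1 by auto
  from lt7[OF this] r1 r2 i show ?thesis
    unfolding Dv_def n
    by (elim disjE insertE emptyE; simp add: nb_def gad_def midnb_def)
qed

lemma right_region_D:
  assumes r1: "r1 \<in> {5,6,7}" and r2: "r2 \<in> {5,6,7}" and n: "n = r1 + r2 + 1 + 5*k" and a: "a < r2"
  shows "Dv r1 r2 n (n - 1 - a) \<le> 43"
proof -
  have "a < 7" using a r2 by auto
  from lt7[OF this] r1 r2 a show ?thesis
    unfolding Dv_def n
    by (elim disjE insertE emptyE; simp add: nb_def gad_def midnb_def)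
qed

lemma mid_region_D:
  assumes r1: "r1 \<in> {5,6,7}" and r2: "r2 \<in> {5,6,7}" and n: "n = r1 + r2 + 1 + 5*k"
    and i1: "r1 \<le> i" and i2: "i < n - r2"
  shows "Dv r1 r2 n i \<le> 15"
proof -
  define q where "q = (i - r1) div 5"
  define t where "t = (i - r1) mod 5"
  have it: "i = r1 + 5 * q + t" unfolding q_def t_def using i1 by simp
  have t5: "t < 5" unfolding t_def by simp
  have "5 * q + t \<le> 5 * k" using i2 it n by simp
  hence qk: "q \<le> k" and tk: "t > 0 \<Longrightarrow> q < k" by auto
  obtain m where km: "k = q + m" using qk le_Suc_ex by blast
  have tm: "t > 0 \<Longrightarrow> m > 0" using tk km by simp
  have mc: "m = 0 \<or> (\<exists>m'. m = Suc m')" by (cases m, auto)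
  from lt5[OF t5] mc r1 r2 tm show ?thesis
    unfolding Dv_def n it km
    by (elim disjE insertE emptyE exE; simp add: nb_def gad_def midnb_def)
qed

definition famG :: "nat \<Rightarrow> nat \<Rightarrow> nat \<Rightarrow> nat \<Rightarrow> nat \<Rightarrow> bool" where
  "famG r1 r2 n i j \<longleftrightarrow> i < n \<and> j < n \<and> j \<in> set (nb r1 r2 n i)"

lemma all_ok:
  assumes r1: "r1 \<in> {5,6,7}" and r2: "r2 \<in> {5,6,7}" and n: "n = r1 + r2 + 1 + 5*k" and i: "i < n"
  shows "nbok r1 r2 n i"
proof (cases "i < r1")
  case True thus ?thesis using left_region[OF r1 r2 n] by blast
next
  case False
  show ?thesis
  proof (cases "n - r2 \<le> i")
    case True
    hence "n - 1 - i < r2" using i by linarith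
    from right_region[OF r1 r2 n this] show ?thesis using i by (simp add: Suc_diff_Suc)
  next
    case False
    thus ?thesis using mid_region[OF r1 r2 n] \<open>\<not> i < r1\<close> by simp
  qed
qed

lemma all_D:
  assumes r1: "r1 \<in> {5,6,7}" and r2: "r2 \<in> {5,6,7}" and n: "n = r1 + r2 + 1 + 5*k" and i: "i < n"
  shows "Dv r1 r2 n i \<le> (if i < r1 \<or> n - r2 \<le> i then 43 else 15)"
proof (cases "i < r1")
  case True thus ?thesis using left_region_D[OF r1 r2 n] by simp
next
  case False
  show ?thesis
  proof (cases "n - r2 \<le> i")
    case True
    hence "n - 1 - i < r2" using i by linarith
    from right_region_D[OF r1 r2 n this] show ?thesis using i True by (simp add: Suc_diff_Suc)
  next
    case False
    thus ?thesis using mid_region_D[OF r1 r2 n] \<open>\<not> i < r1\<close> by simp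
  qed
qed

lemma fam_quartic:
  assumes r1: "r1 \<in> {5,6,7}" and r2: "r2 \<in> {5,6,7}" and n: "n = r1 + r2 + 1 + 5*k"
  shows "quartic n (famG r1 r2 n)"
proof -
  note ok = all_ok[OF r1 r2 n]
  have sg: "simple_graph n (famG r1 r2 n)"
    unfolding simple_graph_def famG_def using ok unfolding nbok_def by blast
  have "degree n (famG r1 r2 n) i = 4" if i: "i < n" for i
  proof -
    have "{j. j < n \<and> famG r1 r2 n i j} = set (nb r1 r2 n i)"
      using ok[OF i] i unfolding famG_def nbok_def by auto
    thus ?thesis using ok[OF i] unfolding degree_def nbok_def by (simp add: distinct_card)
  qed
  thus ?thesis using sg unfolding quartic_def by blast
qed

lemma fam_connected:
  assumes r1: "r1 \<in> {5,6,7}" and r2: "r2 \<in> {5,6,7}" and n: "n = r1 + r2 + 1 + 5*k"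
  shows "connected_graph n (famG r1 r2 n)"
proof -
  note ok = all_ok[OF r1 r2 n]
  let ?G = "famG r1 r2 n"
  have sym: "?G i j \<Longrightarrow> ?G j i" for i j using ok unfolding famG_def nbok_def by blast
  have to0: "?G\<^sup>*\<^sup>* i 0" if "i < n" for i
    using that
  proof (induction i rule: less_induct)
    case (less i)
    show ?case
    proof (cases "i = 0")
      case False
      then obtain j where j: "j \<in> set (nb r1 r2 n i)" "j < i" using ok[OF less.prems] unfolding nbok_def by auto
      have "?G i j" using j less.prems unfolding famG_def by auto
      moreover have "?G\<^sup>*\<^sup>* j 0" using less.IH[OF j(2)] j(2) less.prems by simp
      ultimately show ?thesis by (rule converse_rtranclp_into_rtranclp)
    qed simp
  qed
  have rev: "?G\<^sup>*\<^sup>* a b \<Longrightarrow> ?G\<^sup>*\<^sup>* b a" for a b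
  proof (induction rule: rtranclp_induct)
    case (step y z)
    from sym[OF step.hyps(2)] step.IH show ?case by (rule converse_rtranclp_into_rtranclp)
  qed simp
  show ?thesis unfolding connected_graph_def
    using to0 rev by (meson rtranclp_trans)
qed

lemma fam_energy:
  assumes r1: "r1 \<in> {5,6,7}" and r2: "r2 \<in> {5,6,7}" and n: "n = r1 + r2 + 1 + 5*k"
  shows "(\<Sum>i<n. \<Sum>j<n. if famG r1 r2 n i j then f i j else (0::real)) = (\<Sum>i<n. \<Sum>j\<leftarrow>nb r1 r2 n i. f i j)"
proof (rule sum.cong[OF refl])
  fix i assume "i \<in> {..<n}"
  hence i: "i < n" by simp
  note ok = all_ok[OF r1 r2 n i]
  have sub: "set (nb r1 r2 n i) \<subseteq> {..<n}" using ok unfolding nbok_def by auto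
  have "(\<Sum>j<n. if famG r1 r2 n i j then f i j else 0) = (\<Sum>j\<in>set (nb r1 r2 n i). if famG r1 r2 n i j then f i j else 0)"
    by (rule sum.mono_neutral_right, insert sub i, auto simp: famG_def)
  also have "\<dots> = (\<Sum>j\<in>set (nb r1 r2 n i). f i j)"
    by (rule sum.cong, insert sub i, auto simp: famG_def)
  also have "\<dots> = (\<Sum>j\<leftarrow>nb r1 r2 n i. f i j)"
    using ok unfolding nbok_def by (simp add: sum_list_distinct_conv_sum_set)
  finally show "(\<Sum>j<n. if famG r1 r2 n i j then f i j else 0) = (\<Sum>j\<leftarrow>nb r1 r2 n i. f i j)" .
qed


lemma of_int_sum_list_map: "real_of_int (\<Sum>j\<leftarrow>l. f j) = (\<Sum>j\<leftarrow>l. real_of_int (f j))"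
  by (induct l) auto

lemma conc_bound:
  fixes xs :: "int list" and num den :: int
  assumes r1: "r1 \<in> {5,6,7}" and r2: "r2 \<in> {5,6,7}" and n: "n = r1 + r2 + 1 + 5*k"
    and len: "length xs = n" and sx: "sum_list xs = 0"
    and ineq: "den * (\<Sum>i<n. \<Sum>j\<leftarrow>nb r1 r2 n i. (xs!i - xs!j)^2) < num * 2 * (\<Sum>i<n. (xs!i)^2)"
    and den: "den > 0"
  shows "algebraic_connectivity n (famG r1 r2 n) < of_int num / of_int den"
proof -
  define E where "E = (\<Sum>i<n. \<Sum>j\<leftarrow>nb r1 r2 n i. (xs!i - xs!j)^2)"
  define X where "X = (\<Sum>i<n. (xs!i)^2)"
  have E0: "E \<ge> 0" unfolding E_def by (intro sum_nonneg sum_list_nonneg, auto)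
  have X0: "X \<ge> 0" unfolding X_def by (intro sum_nonneg, auto)
  have "X \<noteq> 0"
  proof
    assume "X = 0"
    with ineq have "den * E < 0" unfolding E_def X_def by simp
    moreover have "den * E \<ge> 0" using den E0 by simp
    ultimately show False by simp
  qed
  hence Xpos: "X > 0" using X0 by simp
  have "\<exists>i<n. xs ! i \<noteq> 0"
  proof (rule ccontr)
    assume "\<not> ?thesis"
    hence "X = 0" unfolding X_def by simp
    thus False using Xpos by simp
  qed
  hence xnz: "\<exists>i<n. real_of_int (xs ! i) \<noteq> 0" by simp
  define x where "x = (\<lambda>i. real_of_int (xs ! i))"
  define c where "c = real_of_int E / (2 * real_of_int X)"
  have sg: "simple_graph n (famG r1 r2 n)" using fam_quartic[OF r1 r2 n] unfolding quartic_def by blast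
  have xs0: "(\<Sum>i<n. x i) = 0"
  proof -
    have "(\<Sum>i<n. x i) = real_of_int (\<Sum>i<n. xs ! i)" unfolding x_def by simp
    also have "(\<Sum>i<n. xs ! i) = sum_list xs" using len by (simp add: sum_list_sum_nth lessThan_atLeast0)
    finally show ?thesis using sx by simp
  qed
  have en_eq: "(\<Sum>i<n. \<Sum>j<n. if famG r1 r2 n i j then (x i - x j)^2 else 0) = real_of_int E"
    unfolding fam_energy[OF r1 r2 n] E_def x_def by (simp add: of_int_sum_list_map)
  have X_eq: "(\<Sum>i<n. (x i)^2) = real_of_int X" unfolding X_def x_def by simp
  have c0: "c \<ge> 0" unfolding c_def using E0 X0 by simp
  have en: "(\<Sum>i<n. \<Sum>j<n. if famG r1 r2 n i j then (x i - x j)^2 else 0) \<le> 2 * c * (\<Sum>i<n. (x i)^2)"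
    unfolding en_eq X_eq c_def using Xpos by simp
  have "algebraic_connectivity n (famG r1 r2 n) \<le> c"
    by (rule algebraic_connectivity_le[OF sg xs0 _ en c0], insert xnz, auto simp: x_def)
  also have "c < of_int num / of_int den"
  proof -
    have "real_of_int (den * E) < real_of_int (num * 2 * X)" using ineq unfolding E_def X_def by linarith
    hence "real_of_int den * real_of_int E < real_of_int num * (2 * real_of_int X)" by simp
    thus ?thesis unfolding c_def using Xpos den by (simp add: field_simps)
  qed
  finally show ?thesis .
qed

lemma sum_real_id: "(\<Sum>i<(n::nat). real i) = real n * (real n - 1) / 2"
  by (induct n) (auto simp: field_simps)

lemma sum_real_sq: "(\<Sum>i<(n::nat). (real i)^2) = real n * (real n - 1) * (2 * real n - 1) / 6"
  by (induct n) (auto simp: field_simps power2_eq_square)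

lemma param_bound:
  assumes r1: "r1 \<in> {5,6,7}" and r2: "r2 \<in> {5,6,7}" and n: "n = r1 + r2 + 1 + 5*k" and n49: "n \<ge> 49"
  shows "algebraic_connectivity n (famG r1 r2 n) \<le> 58 / 1000"
proof -
  define N where "N = real n"
  have N49: "N \<ge> 49" unfolding N_def using n49 by simp
  define x where "x = (\<lambda>i::nat. 2 * real i - (N - 1))"
  have sg: "simple_graph n (famG r1 r2 n)" using fam_quartic[OF r1 r2 n] unfolding quartic_def by blast
  have xs0: "(\<Sum>i<n. x i) = 0"
  proof -
    have "(\<Sum>i<n. x i) = 2 * (\<Sum>i<n. real i) - real n * (N - 1)"
      unfolding x_def by (simp add: sum_subtractf sum_distrib_left)
    thus ?thesis unfolding sum_real_id N_def by (simp add: field_simps)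
  qed
  have xx: "(\<Sum>i<n. (x i)^2) = (N^3 - N) / 3"
  proof -
    have "(\<Sum>i<n. (x i)^2) = (\<Sum>i<n. 4 * (real i)^2 - 4 * (N - 1) * real i + (N - 1)^2)"
      unfolding x_def by (rule sum.cong, auto simp: power2_eq_square algebra_simps)
    also have "\<dots> = 4 * (\<Sum>i<n. (real i)^2) - 4 * (N - 1) * (\<Sum>i<n. real i) + N * (N - 1)^2"
      by (simp add: sum.distrib sum_subtractf sum_distrib_left N_def)
    also have "\<dots> = (N^3 - N) / 3" unfolding sum_real_id sum_real_sq N_def[symmetric]
      by (simp add: field_simps power2_eq_square power3_eq_cube)
    finally show ?thesis .
  qed
  have xnz: "\<exists>i<n. x i \<noteq> 0"
  proof (intro exI[of _ 0] conjI)
    show "0 < n" using n49 by simp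
    show "x 0 \<noteq> 0" unfolding x_def using N49 by simp
  qed
  have Dsum: "(\<Sum>i<n. real_of_int (Dv r1 r2 n i)) \<le> 15 * N + 392"
  proof -
    have "(\<Sum>i<n. real_of_int (Dv r1 r2 n i)) \<le> (\<Sum>i<n. 15 + 28 * (if i < r1 then 1 else 0) + 28 * (if n - r2 \<le> i then 1 else 0))"
    proof (rule sum_mono)
      fix i assume "i \<in> {..<n}"
      hence i: "i < n" by simp
      have "Dv r1 r2 n i \<le> (if i < r1 \<or> n - r2 \<le> i then 43 else 15)" by (rule all_D[OF r1 r2 n i])
      thus "real_of_int (Dv r1 r2 n i) \<le> 15 + 28 * (if i < r1 then 1 else 0) + 28 * (if n - r2 \<le> i then 1 else 0)"
        by (auto split: if_splits)
    qed
    also have "\<dots> = 15 * N + 28 * real (card {i. i < n \<and> i < r1}) + 28 * real (card {i. i < n \<and> n - r2 \<le> i})"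
      by (simp add: sum.distrib sum_distrib_left[symmetric] sum_indicator_card N_def)
    also have "{i. i < n \<and> i < r1} = {..<r1}" using n by auto
    also have "{i. i < n \<and> n - r2 \<le> i} = {n - r2..<n}" by auto
    finally show ?thesis using r1 r2 by auto
  qed
  have en_eq: "(\<Sum>i<n. \<Sum>j<n. if famG r1 r2 n i j then (x i - x j)^2 else 0) = 4 * (\<Sum>i<n. real_of_int (Dv r1 r2 n i))"
  proof -
    have "(\<Sum>i<n. \<Sum>j<n. if famG r1 r2 n i j then (x i - x j)^2 else 0) = (\<Sum>i<n. \<Sum>j\<leftarrow>nb r1 r2 n i. (x i - x j)^2)"
      by (rule fam_energy[OF r1 r2 n])
    also have "\<dots> = (\<Sum>i<n. 4 * real_of_int (Dv r1 r2 n i))"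
    proof (rule sum.cong[OF refl])
      fix i
      have "(\<Sum>j\<leftarrow>nb r1 r2 n i. (x i - x j)^2) = (\<Sum>j\<leftarrow>nb r1 r2 n i. 4 * real_of_int ((int i - int j)^2))"
        by (rule arg_cong[where f = sum_list], rule map_cong, auto simp: x_def power2_eq_square algebra_simps)
      also have "\<dots> = 4 * real_of_int (Dv r1 r2 n i)"
        unfolding Dv_def of_int_sum_list_map by (simp add: sum_list_const_mult)
      finally show "(\<Sum>j\<leftarrow>nb r1 r2 n i. (x i - x j)^2) = 4 * real_of_int (Dv r1 r2 n i)" .
    qed
    finally show ?thesis by (simp add: sum_distrib_left)
  qed
  have poly: "4 * (15 * N + 392) \<le> 2 * (58 / 1000) * ((N^3 - N) / 3)"
  proof -
    have "N * N \<ge> 49 * 49" using N49 by (intro mult_mono, auto)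
    hence "N * (N * N) \<ge> N * (49 * 49)" using N49 by (intro mult_left_mono, auto)
    hence "N^3 \<ge> 2401 * N" unfolding power3_eq_cube by (simp add: mult.assoc)
    thus ?thesis using N49 by simp
  qed
  have en: "(\<Sum>i<n. \<Sum>j<n. if famG r1 r2 n i j then (x i - x j)^2 else 0) \<le> 2 * (58/1000) * (\<Sum>i<n. (x i)^2)"
  proof -
    have "4 * (\<Sum>i<n. real_of_int (Dv r1 r2 n i)) \<le> 4 * (15 * N + 392)" using Dsum by simp
    also have "\<dots> \<le> 2 * (58 / 1000) * ((N^3 - N) / 3)" by (rule poly)
    finally show ?thesis unfolding en_eq xx .
  qed
  show ?thesis by (rule algebraic_connectivity_le[OF sg xs0 xnz en], simp)
qed

definition r1f :: "nat \<Rightarrow> nat" where "r1f n = [5,5,6,6,7] ! ((n - 11) mod 5)"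
definition r2f :: "nat \<Rightarrow> nat" where "r2f n = [5,6,6,7,7] ! ((n - 11) mod 5)"
definition kf :: "nat \<Rightarrow> nat" where "kf n = (n - 11) div 5"

definition bnd :: "nat \<Rightarrow> real" where
  "bnd n = (if n < 13 then 355/1000 else if n < 18 then 268/1000 else if n < 21 then 129/1000
     else if n < 26 then 91/1000 else 59/1000)"

definition xs11 :: "int list" where "xs11 = [100000, 100000, 100000, 82288, 82288, 0, -82288, -82288, -100000, -100000, -100000]"

lemma chk11: "length xs11 = 11 \<and> sum_list xs11 = 0 \<and> 1000 * (\<Sum>i<11. \<Sum>j\<leftarrow>nb 5 5 11 i. (xs11!i - xs11!j)^2) < 355 * 2 * (\<Sum>i<11. (xs11!i)^2)"
  by code_simp

lemma ac11: "algebraic_connectivity 11 (famG (r1f 11) (r2f 11) 11) < bnd 11"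
  using conc_bound[of 5 5 11 0 xs11 1000 355] chk11 by (simp add: r1f_def r2f_def bnd_def)

definition xs12 :: "int list" where "xs12 = [100002, 100000, 100000, 84593, 84593, 12306, -61877, -61877, -89435, -89435, -89435, -89435]"

lemma chk12: "length xs12 = 12 \<and> sum_list xs12 = 0 \<and> 1000 * (\<Sum>i<12. \<Sum>j\<leftarrow>nb 5 6 12 i. (xs12!i - xs12!j)^2) < 355 * 2 * (\<Sum>i<12. (xs12!i)^2)"
  by code_simp

lemma ac12: "algebraic_connectivity 12 (famG (r1f 12) (r2f 12) 12) < bnd 12"
  using conc_bound[of 5 6 12 0 xs12 1000 355] chk12 by (simp add: r1f_def r2f_def bnd_def)

definition xs13 :: "int list" where "xs13 = [100000, 100000, 100000, 100000, 73205, 73205, 0, -73205, -73205, -100000, -100000, -100000, -100000]"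

lemma chk13: "length xs13 = 13 \<and> sum_list xs13 = 0 \<and> 1000 * (\<Sum>i<13. \<Sum>j\<leftarrow>nb 6 6 13 i. (xs13!i - xs13!j)^2) < 268 * 2 * (\<Sum>i<13. (xs13!i)^2)"
  by code_simp

lemma ac13: "algebraic_connectivity 13 (famG (r1f 13) (r2f 13) 13) < bnd 13"
  using conc_bound[of 6 6 13 0 xs13 1000 268] chk13 by (simp add: r1f_def r2f_def bnd_def)

definition xs14 :: "int list" where "xs14 = [-100001, -100000, -100000, -100000, -75947, -75947, -9575, 57949, 57949, 80632, 88852, 88852, 93618, 93618]"

lemma chk14: "length xs14 = 14 \<and> sum_list xs14 = 0 \<and> 1000 * (\<Sum>i<14. \<Sum>j\<leftarrow>nb 6 7 14 i. (xs14!i - xs14!j)^2) < 268 * 2 * (\<Sum>i<14. (xs14!i)^2)"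
  by code_simp

lemma ac14: "algebraic_connectivity 14 (famG (r1f 14) (r2f 14) 14) < bnd 14"
  using conc_bound[of 6 7 14 0 xs14 1000 268] chk14 by (simp add: r1f_def r2f_def bnd_def)

definition xs15 :: "int list" where "xs15 = [100000, 100000, 95432, 95432, 87583, 65727, 65727, 0, -65727, -65727, -87583, -95432, -95432, -100000, -100000]"

lemma chk15: "length xs15 = 15 \<and> sum_list xs15 = 0 \<and> 1000 * (\<Sum>i<15. \<Sum>j\<leftarrow>nb 7 7 15 i. (xs15!i - xs15!j)^2) < 268 * 2 * (\<Sum>i<15. (xs15!i)^2)"
  by code_simp

lemma ac15: "algebraic_connectivity 15 (famG (r1f 15) (r2f 15) 15) < bnd 15"
  using conc_bound[of 7 7 15 0 xs15 1000 268] chk15 by (simp add: r1f_def r2f_def bnd_def)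

definition xs16 :: "int list" where "xs16 = [-100000, -100000, -100000, -92076, -92076, -53713, -11094, -11094, 11094, 11094, 53713, 92076, 92076, 100000, 100000, 100000]"

lemma chk16: "length xs16 = 16 \<and> sum_list xs16 = 0 \<and> 1000 * (\<Sum>i<16. \<Sum>j\<leftarrow>nb 5 5 16 i. (xs16!i - xs16!j)^2) < 268 * 2 * (\<Sum>i<16. (xs16!i)^2)"
  by code_simp

lemma ac16: "algebraic_connectivity 16 (famG (r1f 16) (r2f 16) 16) < bnd 16"
  using conc_bound[of 5 5 16 1 xs16 1000 268] chk16 by (simp add: r1f_def r2f_def bnd_def)

definition xs17 :: "int list" where "xs17 = [99998, 100000, 100000, 92884, 92884, 58318, 19602, 19602, -1150, -1150, -42492, -80810, -80810, -94219, -94219, -94219, -94219]"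

lemma chk17: "length xs17 = 17 \<and> sum_list xs17 = 0 \<and> 1000 * (\<Sum>i<17. \<Sum>j\<leftarrow>nb 5 6 17 i. (xs17!i - xs17!j)^2) < 268 * 2 * (\<Sum>i<17. (xs17!i)^2)"
  by code_simp

lemma ac17: "algebraic_connectivity 17 (famG (r1f 17) (r2f 17) 17) < bnd 17"
  using conc_bound[of 5 6 17 1 xs17 1000 268] chk17 by (simp add: r1f_def r2f_def bnd_def)

definition xs18 :: "int list" where "xs18 = [100000, 100000, 100000, 100000, 87183, 87183, 50376, 10340, 10340, -10340, -10340, -50376, -87183, -87183, -100000, -100000, -100000, -100000]"

lemma chk18: "length xs18 = 18 \<and> sum_list xs18 = 0 \<and> 1000 * (\<Sum>i<18. \<Sum>j\<leftarrow>nb 6 6 18 i. (xs18!i - xs18!j)^2) < 129 * 2 * (\<Sum>i<18. (xs18!i)^2)"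
  by code_simp

lemma ac18: "algebraic_connectivity 18 (famG (r1f 18) (r2f 18) 18) < bnd 18"
  using conc_bound[of 6 6 18 1 xs18 1000 129] chk18 by (simp add: r1f_def r2f_def bnd_def)

definition xs19 :: "int list" where "xs19 = [100003, 100000, 100000, 100000, 88265, 88265, 54437, 17415, 17415, -2118, -2118, -40935, -77350, -77350, -88999, -93040, -93040, -95425, -95425]"

lemma chk19: "length xs19 = 19 \<and> sum_list xs19 = 0 \<and> 1000 * (\<Sum>i<19. \<Sum>j\<leftarrow>nb 6 7 19 i. (xs19!i - xs19!j)^2) < 129 * 2 * (\<Sum>i<19. (xs19!i)^2)"
  by code_simp

lemma ac19: "algebraic_connectivity 19 (famG (r1f 19) (r2f 19) 19) < bnd 19"
  using conc_bound[of 6 7 19 1 xs19 1000 129] chk19 by (simp add: r1f_def r2f_def bnd_def)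

definition xs20 :: "int list" where "xs20 = [100000, 100000, 97708, 97708, 93831, 82618, 82618, 47431, 9695, 9695, -9695, -9695, -47431, -82618, -82618, -93831, -97708, -97708, -100000, -100000]"

lemma chk20: "length xs20 = 20 \<and> sum_list xs20 = 0 \<and> 1000 * (\<Sum>i<20. \<Sum>j\<leftarrow>nb 7 7 20 i. (xs20!i - xs20!j)^2) < 129 * 2 * (\<Sum>i<20. (xs20!i)^2)"
  by code_simp

lemma ac20: "algebraic_connectivity 20 (famG (r1f 20) (r2f 20) 20) < bnd 20"
  using conc_bound[of 7 7 20 1 xs20 1000 129] chk20 by (simp add: r1f_def r2f_def bnd_def)

definition xs21 :: "int list" where "xs21 = [-100000, -100000, -100000, -95476, -95476, -73264, -47738, -47738, -32815, -32815, 0, 32815, 32815, 47738, 47738, 73264, 95476, 95476, 100000, 100000, 100000]"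

lemma chk21: "length xs21 = 21 \<and> sum_list xs21 = 0 \<and> 1000 * (\<Sum>i<21. \<Sum>j\<leftarrow>nb 5 5 21 i. (xs21!i - xs21!j)^2) < 91 * 2 * (\<Sum>i<21. (xs21!i)^2)"
  by code_simp

lemma ac21: "algebraic_connectivity 21 (famG (r1f 21) (r2f 21) 21) < bnd 21"
  using conc_bound[of 5 5 21 2 xs21 1000 91] chk21 by (simp add: r1f_def r2f_def bnd_def)

definition xs22 :: "int list" where "xs22 = [100000, 100000, 100000, 95848, 95848, 75434, 51888, 51888, 37961, 37961, 6954, -24341, -24341, -38978, -38978, -65016, -88354, -88354, -96355, -96355, -96355, -96355]"

lemma chk22: "length xs22 = 22 \<and> sum_list xs22 = 0 \<and> 1000 * (\<Sum>i<22. \<Sum>j\<leftarrow>nb 5 6 22 i. (xs22!i - xs22!j)^2) < 91 * 2 * (\<Sum>i<22. (xs22!i)^2)"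
  by code_simp

lemma ac22: "algebraic_connectivity 22 (famG (r1f 22) (r2f 22) 22) < bnd 22"
  using conc_bound[of 5 6 22 2 xs22 1000 91] chk22 by (simp add: r1f_def r2f_def bnd_def)

definition xs23 :: "int list" where "xs23 = [100000, 100000, 100000, 100000, 92361, 92361, 70029, 45022, 45022, 30799, 30799, 0, -30799, -30799, -45022, -45022, -70029, -92361, -92361, -100000, -100000, -100000, -100000]"

lemma chk23: "length xs23 = 23 \<and> sum_list xs23 = 0 \<and> 1000 * (\<Sum>i<23. \<Sum>j\<leftarrow>nb 6 6 23 i. (xs23!i - xs23!j)^2) < 91 * 2 * (\<Sum>i<23. (xs23!i)^2)"
  by code_simp

lemma ac23: "algebraic_connectivity 23 (famG (r1f 23) (r2f 23) 23) < bnd 23"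
  using conc_bound[of 6 6 23 2 xs23 1000 91] chk23 by (simp add: r1f_def r2f_def bnd_def)

definition xs24 :: "int list" where "xs24 = [99999, 100000, 100000, 100000, 92905, 92905, 72123, 48783, 48783, 35382, 35382, 6070, -23457, -23457, -37389, -37389, -62599, -85588, -85588, -92813, -95280, -95280, -96746, -96746]"

lemma chk24: "length xs24 = 24 \<and> sum_list xs24 = 0 \<and> 1000 * (\<Sum>i<24. \<Sum>j\<leftarrow>nb 6 7 24 i. (xs24!i - xs24!j)^2) < 91 * 2 * (\<Sum>i<24. (xs24!i)^2)"
  by code_simp

lemma ac24: "algebraic_connectivity 24 (famG (r1f 24) (r2f 24) 24) < bnd 24"
  using conc_bound[of 6 7 24 2 xs24 1000 91] chk24 by (simp add: r1f_def r2f_def bnd_def)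

definition xs25 :: "int list" where "xs25 = [100000, 100000, 98591, 98591, 96221, 89267, 89267, 67100, 42720, 42720, 29120, 29120, 0, -29120, -29120, -42720, -42720, -67100, -89267, -89267, -96221, -98591, -98591, -100000, -100000]"

lemma chk25: "length xs25 = 25 \<and> sum_list xs25 = 0 \<and> 1000 * (\<Sum>i<25. \<Sum>j\<leftarrow>nb 7 7 25 i. (xs25!i - xs25!j)^2) < 91 * 2 * (\<Sum>i<25. (xs25!i)^2)"
  by code_simp

lemma ac25: "algebraic_connectivity 25 (famG (r1f 25) (r2f 25) 25) < bnd 25"
  using conc_bound[of 7 7 25 2 xs25 1000 91] chk25 by (simp add: r1f_def r2f_def bnd_def)

definition xs26 :: "int list" where "xs26 = [100000, 100000, 100000, 97066, 97066, 82571, 65652, 65652, 55267, 55267, 31255, 6325, 6325, -6325, -6325, -31255, -55267, -55267, -65652, -65652, -82571, -97066, -97066, -100000, -100000, -100000]"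

lemma chk26: "length xs26 = 26 \<and> sum_list xs26 = 0 \<and> 1000 * (\<Sum>i<26. \<Sum>j\<leftarrow>nb 5 5 26 i. (xs26!i - xs26!j)^2) < 59 * 2 * (\<Sum>i<26. (xs26!i)^2)"
  by code_simp

lemma ac26: "algebraic_connectivity 26 (famG (r1f 26) (r2f 26) 26) < bnd 26"
  using conc_bound[of 5 5 26 3 xs26 1000 59] chk26 by (simp add: r1f_def r2f_def bnd_def)

definition xs27 :: "int list" where "xs27 = [998, 1000, 1000, 973, 973, 838, 680, 680, 582, 582, 355, 119, 119, -3, -3, -246, -482, -482, -587, -587, -765, -922, -922, -975, -975, -975, -975]"

lemma chk27: "length xs27 = 27 \<and> sum_list xs27 = 0 \<and> 1000 * (\<Sum>i<27. \<Sum>j\<leftarrow>nb 5 6 27 i. (xs27!i - xs27!j)^2) < 59 * 2 * (\<Sum>i<27. (xs27!i)^2)"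
  by code_simp

lemma ac27: "algebraic_connectivity 27 (famG (r1f 27) (r2f 27) 27) < bnd 27"
  using conc_bound[of 5 6 27 3 xs27 1000 59] chk27 by (simp add: r1f_def r2f_def bnd_def)

definition xs28 :: "int list" where "xs28 = [-1000, -1000, -1000, -1000, -949, -949, -799, -628, -628, -527, -527, -297, -60, -60, 60, 60, 297, 527, 527, 628, 628, 799, 949, 949, 1000, 1000, 1000, 1000]"

lemma chk28: "length xs28 = 28 \<and> sum_list xs28 = 0 \<and> 1000 * (\<Sum>i<28. \<Sum>j\<leftarrow>nb 6 6 28 i. (xs28!i - xs28!j)^2) < 59 * 2 * (\<Sum>i<28. (xs28!i)^2)"
  by code_simp

lemma ac28: "algebraic_connectivity 28 (famG (r1f 28) (r2f 28) 28) < bnd 28"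
  using conc_bound[of 6 6 28 3 xs28 1000 59] chk28 by (simp add: r1f_def r2f_def bnd_def)

definition xs29 :: "int list" where "xs29 = [1000, 1000, 1000, 1000, 952, 952, 811, 650, 650, 554, 554, 336, 110, 110, -6, -6, -237, -463, -463, -565, -565, -741, -900, -900, -949, -966, -966, -976, -976]"

lemma chk29: "length xs29 = 29 \<and> sum_list xs29 = 0 \<and> 1000 * (\<Sum>i<29. \<Sum>j\<leftarrow>nb 6 7 29 i. (xs29!i - xs29!j)^2) < 59 * 2 * (\<Sum>i<29. (xs29!i)^2)"
  by code_simp

lemma ac29: "algebraic_connectivity 29 (famG (r1f 29) (r2f 29) 29) < bnd 29"
  using conc_bound[of 6 7 29 3 xs29 1000 59] chk29 by (simp add: r1f_def r2f_def bnd_def)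

definition xs30 :: "int list" where "xs30 = [1000, 1000, 990, 990, 974, 927, 927, 774, 603, 603, 504, 504, 284, 57, 57, -57, -57, -284, -504, -504, -603, -603, -774, -927, -927, -974, -990, -990, -1000, -1000]"

lemma chk30: "length xs30 = 30 \<and> sum_list xs30 = 0 \<and> 1000 * (\<Sum>i<30. \<Sum>j\<leftarrow>nb 7 7 30 i. (xs30!i - xs30!j)^2) < 59 * 2 * (\<Sum>i<30. (xs30!i)^2)"
  by code_simp

lemma ac30: "algebraic_connectivity 30 (famG (r1f 30) (r2f 30) 30) < bnd 30"
  using conc_bound[of 7 7 30 3 xs30 1000 59] chk30 by (simp add: r1f_def r2f_def bnd_def)

definition xs31 :: "int list" where "xs31 = [1000, 1000, 1000, 979, 979, 877, 757, 757, 682, 682, 502, 313, 313, 211, 211, 0, -211, -211, -313, -313, -502, -682, -682, -757, -757, -877, -979, -979, -1000, -1000, -1000]"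

lemma chk31: "length xs31 = 31 \<and> sum_list xs31 = 0 \<and> 1000 * (\<Sum>i<31. \<Sum>j\<leftarrow>nb 5 5 31 i. (xs31!i - xs31!j)^2) < 59 * 2 * (\<Sum>i<31. (xs31!i)^2)"
  by code_simp

lemma ac31: "algebraic_connectivity 31 (famG (r1f 31) (r2f 31) 31) < bnd 31"
  using conc_bound[of 5 5 31 4 xs31 1000 59] chk31 by (simp add: r1f_def r2f_def bnd_def)

definition xs32 :: "int list" where "xs32 = [998, 1000, 1000, 981, 981, 885, 771, 771, 700, 700, 530, 349, 349, 252, 252, 48, -156, -156, -256, -256, -444, -624, -624, -702, -702, -831, -944, -944, -982, -982, -982, -982]"

lemma chk32: "length xs32 = 32 \<and> sum_list xs32 = 0 \<and> 1000 * (\<Sum>i<32. \<Sum>j\<leftarrow>nb 5 6 32 i. (xs32!i - xs32!j)^2) < 59 * 2 * (\<Sum>i<32. (xs32!i)^2)"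
  by code_simp

lemma ac32: "algebraic_connectivity 32 (famG (r1f 32) (r2f 32) 32) < bnd 32"
  using conc_bound[of 5 6 32 4 xs32 1000 59] chk32 by (simp add: r1f_def r2f_def bnd_def)

definition xs33 :: "int list" where "xs33 = [1000, 1000, 1000, 1000, 963, 963, 855, 732, 732, 656, 656, 482, 299, 299, 202, 202, 0, -202, -202, -299, -299, -482, -656, -656, -732, -732, -855, -963, -963, -1000, -1000, -1000, -1000]"

lemma chk33: "length xs33 = 33 \<and> sum_list xs33 = 0 \<and> 1000 * (\<Sum>i<33. \<Sum>j\<leftarrow>nb 6 6 33 i. (xs33!i - xs33!j)^2) < 59 * 2 * (\<Sum>i<33. (xs33!i)^2)"
  by code_simp

lemma ac33: "algebraic_connectivity 33 (famG (r1f 33) (r2f 33) 33) < bnd 33"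
  using conc_bound[of 6 6 33 4 xs33 1000 59] chk33 by (simp add: r1f_def r2f_def bnd_def)

definition xs34 :: "int list" where "xs34 = [-1000, -1000, -1000, -1000, -965, -965, -863, -746, -746, -674, -674, -508, -333, -333, -239, -239, -44, 151, 151, 247, 247, 429, 603, 603, 680, 680, 810, 926, 926, 962, 975, 975, 982, 982]"

lemma chk34: "length xs34 = 34 \<and> sum_list xs34 = 0 \<and> 1000 * (\<Sum>i<34. \<Sum>j\<leftarrow>nb 6 7 34 i. (xs34!i - xs34!j)^2) < 59 * 2 * (\<Sum>i<34. (xs34!i)^2)"
  by code_simp

lemma ac34: "algebraic_connectivity 34 (famG (r1f 34) (r2f 34) 34) < bnd 34"
  using conc_bound[of 6 7 34 4 xs34 1000 59] chk34 by (simp add: r1f_def r2f_def bnd_def)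

definition xs35 :: "int list" where "xs35 = [1000, 1000, 993, 993, 981, 946, 946, 834, 708, 708, 634, 634, 464, 287, 287, 193, 193, 0, -193, -193, -287, -287, -464, -634, -634, -708, -708, -834, -946, -946, -981, -993, -993, -1000, -1000]"

lemma chk35: "length xs35 = 35 \<and> sum_list xs35 = 0 \<and> 1000 * (\<Sum>i<35. \<Sum>j\<leftarrow>nb 7 7 35 i. (xs35!i - xs35!j)^2) < 59 * 2 * (\<Sum>i<35. (xs35!i)^2)"
  by code_simp

lemma ac35: "algebraic_connectivity 35 (famG (r1f 35) (r2f 35) 35) < bnd 35"
  using conc_bound[of 7 7 35 4 xs35 1000 59] chk35 by (simp add: r1f_def r2f_def bnd_def)

definition xs36 :: "int list" where "xs36 = [1000, 1000, 1000, 985, 985, 909, 819, 819, 762, 762, 624, 477, 477, 396, 396, 222, 45, 45, -45, -45, -222, -396, -396, -477, -477, -624, -762, -762, -819, -819, -909, -985, -985, -1000, -1000, -1000]"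

lemma chk36: "length xs36 = 36 \<and> sum_list xs36 = 0 \<and> 1000 * (\<Sum>i<36. \<Sum>j\<leftarrow>nb 5 5 36 i. (xs36!i - xs36!j)^2) < 59 * 2 * (\<Sum>i<36. (xs36!i)^2)"
  by code_simp

lemma ac36: "algebraic_connectivity 36 (famG (r1f 36) (r2f 36) 36) < bnd 36"
  using conc_bound[of 5 5 36 5 xs36 1000 59] chk36 by (simp add: r1f_def r2f_def bnd_def)

definition xs37 :: "int list" where "xs37 = [999, 1000, 1000, 986, 986, 914, 829, 829, 774, 774, 643, 502, 502, 424, 424, 257, 86, 86, -1, -1, -175, -346, -346, -427, -427, -575, -716, -716, -776, -776, -873, -958, -958, -986, -986, -986, -986]"

lemma chk37: "length xs37 = 37 \<and> sum_list xs37 = 0 \<and> 1000 * (\<Sum>i<37. \<Sum>j\<leftarrow>nb 5 6 37 i. (xs37!i - xs37!j)^2) < 59 * 2 * (\<Sum>i<37. (xs37!i)^2)"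
  by code_simp

lemma ac37: "algebraic_connectivity 37 (famG (r1f 37) (r2f 37) 37) < bnd 37"
  using conc_bound[of 5 6 37 5 xs37 1000 59] chk37 by (simp add: r1f_def r2f_def bnd_def)

definition xs38 :: "int list" where "xs38 = [1000, 1000, 1000, 1000, 973, 973, 891, 797, 797, 739, 739, 603, 459, 459, 380, 380, 213, 43, 43, -43, -43, -213, -380, -380, -459, -459, -603, -739, -739, -797, -797, -891, -973, -973, -1000, -1000, -1000, -1000]"

lemma chk38: "length xs38 = 38 \<and> sum_list xs38 = 0 \<and> 1000 * (\<Sum>i<38. \<Sum>j\<leftarrow>nb 6 6 38 i. (xs38!i - xs38!j)^2) < 59 * 2 * (\<Sum>i<38. (xs38!i)^2)"
  by code_simp

lemma ac38: "algebraic_connectivity 38 (famG (r1f 38) (r2f 38) 38) < bnd 38"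
  using conc_bound[of 6 6 38 5 xs38 1000 59] chk38 by (simp add: r1f_def r2f_def bnd_def)

definition xs39 :: "int list" where "xs39 = [1001, 1000, 1000, 1000, 974, 974, 896, 807, 807, 751, 751, 621, 483, 483, 407, 407, 246, 81, 81, -3, -3, -169, -334, -334, -412, -412, -557, -695, -695, -755, -755, -855, -944, -944, -971, -980, -980, -986, -986]"

lemma chk39: "length xs39 = 39 \<and> sum_list xs39 = 0 \<and> 1000 * (\<Sum>i<39. \<Sum>j\<leftarrow>nb 6 7 39 i. (xs39!i - xs39!j)^2) < 59 * 2 * (\<Sum>i<39. (xs39!i)^2)"
  by code_simp

lemma ac39: "algebraic_connectivity 39 (famG (r1f 39) (r2f 39) 39) < bnd 39"
  using conc_bound[of 6 7 39 5 xs39 1000 59] chk39 by (simp add: r1f_def r2f_def bnd_def)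

definition xs40 :: "int list" where "xs40 = [-1000, -1000, -995, -995, -986, -959, -959, -873, -777, -777, -718, -718, -584, -443, -443, -367, -367, -205, -41, -41, 41, 41, 205, 367, 367, 443, 443, 584, 718, 718, 777, 777, 873, 959, 959, 986, 995, 995, 1000, 1000]"

lemma chk40: "length xs40 = 40 \<and> sum_list xs40 = 0 \<and> 1000 * (\<Sum>i<40. \<Sum>j\<leftarrow>nb 7 7 40 i. (xs40!i - xs40!j)^2) < 59 * 2 * (\<Sum>i<40. (xs40!i)^2)"
  by code_simp

lemma ac40: "algebraic_connectivity 40 (famG (r1f 40) (r2f 40) 40) < bnd 40"
  using conc_bound[of 7 7 40 5 xs40 1000 59] chk40 by (simp add: r1f_def r2f_def bnd_def)

definition xs41 :: "int list" where "xs41 = [1000, 1000, 1000, 988, 988, 930, 860, 860, 816, 816, 707, 590, 590, 524, 524, 381, 233, 233, 157, 157, 0, -157, -157, -233, -233, -381, -524, -524, -590, -590, -707, -816, -816, -860, -860, -930, -988, -988, -1000, -1000, -1000]"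

lemma chk41: "length xs41 = 41 \<and> sum_list xs41 = 0 \<and> 1000 * (\<Sum>i<41. \<Sum>j\<leftarrow>nb 5 5 41 i. (xs41!i - xs41!j)^2) < 59 * 2 * (\<Sum>i<41. (xs41!i)^2)"
  by code_simp

lemma ac41: "algebraic_connectivity 41 (famG (r1f 41) (r2f 41) 41) < bnd 41"
  using conc_bound[of 5 5 41 6 xs41 1000 59] chk41 by (simp add: r1f_def r2f_def bnd_def)

definition xs42 :: "int list" where "xs42 = [996, 1000, 1000, 989, 989, 933, 867, 867, 824, 824, 720, 608, 608, 545, 545, 407, 264, 264, 190, 190, 37, -116, -116, -191, -191, -338, -480, -480, -546, -546, -666, -778, -778, -825, -825, -901, -967, -967, -989, -989, -989, -989]"

lemma chk42: "length xs42 = 42 \<and> sum_list xs42 = 0 \<and> 1000 * (\<Sum>i<42. \<Sum>j\<leftarrow>nb 5 6 42 i. (xs42!i - xs42!j)^2) < 59 * 2 * (\<Sum>i<42. (xs42!i)^2)"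
  by code_simp

lemma ac42: "algebraic_connectivity 42 (famG (r1f 42) (r2f 42) 42) < bnd 42"
  using conc_bound[of 5 6 42 6 xs42 1000 59] chk42 by (simp add: r1f_def r2f_def bnd_def)

definition xs43 :: "int list" where "xs43 = [1000, 1000, 1000, 1000, 979, 979, 915, 841, 841, 795, 795, 687, 571, 571, 507, 507, 368, 225, 225, 151, 151, 0, -151, -151, -225, -225, -368, -507, -507, -571, -571, -687, -795, -795, -841, -841, -915, -979, -979, -1000, -1000, -1000, -1000]"

lemma chk43: "length xs43 = 43 \<and> sum_list xs43 = 0 \<and> 1000 * (\<Sum>i<43. \<Sum>j\<leftarrow>nb 6 6 43 i. (xs43!i - xs43!j)^2) < 59 * 2 * (\<Sum>i<43. (xs43!i)^2)"
  by code_simp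

lemma ac43: "algebraic_connectivity 43 (famG (r1f 43) (r2f 43) 43) < bnd 43"
  using conc_bound[of 6 6 43 6 xs43 1000 59] chk43 by (simp add: r1f_def r2f_def bnd_def)

definition xs44 :: "int list" where "xs44 = [999, 1000, 1000, 1000, 980, 980, 918, 848, 848, 804, 804, 700, 588, 588, 526, 526, 392, 254, 254, 182, 182, 35, -113, -113, -186, -186, -327, -465, -465, -530, -530, -647, -758, -758, -806, -806, -885, -955, -955, -977, -984, -984, -989, -989]"

lemma chk44: "length xs44 = 44 \<and> sum_list xs44 = 0 \<and> 1000 * (\<Sum>i<44. \<Sum>j\<leftarrow>nb 6 7 44 i. (xs44!i - xs44!j)^2) < 59 * 2 * (\<Sum>i<44. (xs44!i)^2)"
  by code_simp

lemma ac44: "algebraic_connectivity 44 (famG (r1f 44) (r2f 44) 44) < bnd 44"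
  using conc_bound[of 6 7 44 6 xs44 1000 59] chk44 by (simp add: r1f_def r2f_def bnd_def)

definition xs45 :: "int list" where "xs45 = [1000, 1000, 996, 996, 989, 968, 968, 900, 823, 823, 777, 777, 669, 554, 554, 491, 491, 356, 217, 217, 146, 146, 0, -146, -146, -217, -217, -356, -491, -491, -554, -554, -669, -777, -777, -823, -823, -900, -968, -968, -989, -996, -996, -1000, -1000]"

lemma chk45: "length xs45 = 45 \<and> sum_list xs45 = 0 \<and> 1000 * (\<Sum>i<45. \<Sum>j\<leftarrow>nb 7 7 45 i. (xs45!i - xs45!j)^2) < 59 * 2 * (\<Sum>i<45. (xs45!i)^2)"
  by code_simp

lemma ac45: "algebraic_connectivity 45 (famG (r1f 45) (r2f 45) 45) < bnd 45"
  using conc_bound[of 7 7 45 6 xs45 1000 59] chk45 by (simp add: r1f_def r2f_def bnd_def)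

definition xs46 :: "int list" where "xs46 = [1000, 1000, 1000, 991, 991, 944, 889, 889, 853, 853, 765, 670, 670, 617, 617, 498, 374, 374, 309, 309, 173, 35, 35, -35, -35, -173, -309, -309, -374, -374, -498, -617, -617, -670, -670, -765, -853, -853, -889, -889, -944, -991, -991, -1000, -1000, -1000]"

lemma chk46: "length xs46 = 46 \<and> sum_list xs46 = 0 \<and> 1000 * (\<Sum>i<46. \<Sum>j\<leftarrow>nb 5 5 46 i. (xs46!i - xs46!j)^2) < 59 * 2 * (\<Sum>i<46. (xs46!i)^2)"
  by code_simp

lemma ac46: "algebraic_connectivity 46 (famG (r1f 46) (r2f 46) 46) < bnd 46"
  using conc_bound[of 5 5 46 7 xs46 1000 59] chk46 by (simp add: r1f_def r2f_def bnd_def)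

definition xs47 :: "int list" where "xs47 = [-1001, -1000, -1000, -991, -991, -946, -893, -893, -859, -859, -775, -683, -683, -632, -632, -517, -397, -397, -334, -334, -201, -67, -67, 1, 1, 136, 270, 270, 335, 335, 459, 578, 578, 632, 632, 730, 821, 821, 860, 860, 921, 974, 974, 991, 991, 991, 991]"

lemma chk47: "length xs47 = 47 \<and> sum_list xs47 = 0 \<and> 1000 * (\<Sum>i<47. \<Sum>j\<leftarrow>nb 5 6 47 i. (xs47!i - xs47!j)^2) < 59 * 2 * (\<Sum>i<47. (xs47!i)^2)"
  by code_simp

lemma ac47: "algebraic_connectivity 47 (famG (r1f 47) (r2f 47) 47) < bnd 47"
  using conc_bound[of 5 6 47 7 xs47 1000 59] chk47 by (simp add: r1f_def r2f_def bnd_def)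

definition xs48 :: "int list" where "xs48 = [1000, 1000, 1000, 1000, 983, 983, 932, 872, 872, 835, 835, 747, 652, 652, 599, 599, 483, 362, 362, 299, 299, 167, 33, 33, -33, -33, -167, -299, -299, -362, -362, -483, -599, -599, -652, -652, -747, -835, -835, -872, -872, -932, -983, -983, -1000, -1000, -1000, -1000]"

lemma chk48: "length xs48 = 48 \<and> sum_list xs48 = 0 \<and> 1000 * (\<Sum>i<48. \<Sum>j\<leftarrow>nb 6 6 48 i. (xs48!i - xs48!j)^2) < 59 * 2 * (\<Sum>i<48. (xs48!i)^2)"
  by code_simp

lemma ac48: "algebraic_connectivity 48 (famG (r1f 48) (r2f 48) 48) < bnd 48"
  using conc_bound[of 6 6 48 7 xs48 1000 59] chk48 by (simp add: r1f_def r2f_def bnd_def)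


lemma fam_params:
  assumes "n \<ge> 11"
  shows "r1f n \<in> {5,6,7}" "r2f n \<in> {5,6,7}" "n = r1f n + r2f n + 1 + 5 * kf n"
proof -
  have dm: "n = 11 + 5 * kf n + (n - 11) mod 5" unfolding kf_def using assms by simp
  have "(n - 11) mod 5 < 5" by simp
  from lt5[OF this] dm
  show "r1f n \<in> {5,6,7}" "r2f n \<in> {5,6,7}" "n = r1f n + r2f n + 1 + 5 * kf n"
    unfolding r1f_def r2f_def by (elim disjE; simp)+
qed

lemma fam_lt:
  assumes n11: "n \<ge> 11"
  shows "algebraic_connectivity n (famG (r1f n) (r2f n) n) < bnd n"
proof (cases "n \<ge> 49")
  case True
  note p = fam_params[OF n11]
  have "algebraic_connectivity n (famG (r1f n) (r2f n) n) \<le> 58/1000" by (rule param_bound[OF p True])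
  also have "58/1000 < bnd n" using True unfolding bnd_def by simp
  finally show ?thesis .
next
  case False
  hence "n = 11 \<or> n = 12 \<or> n = 13 \<or> n = 14 \<or> n = 15 \<or> n = 16 \<or> n = 17 \<or> n = 18 \<or> n = 19 \<or> n = 20 \<or> n = 21 \<or> n = 22 \<or> n = 23 \<or> n = 24 \<or> n = 25 \<or> n = 26 \<or> n = 27 \<or> n = 28 \<or> n = 29 \<or> n = 30 \<or> n = 31 \<or> n = 32 \<or> n = 33 \<or> n = 34 \<or> n = 35 \<or> n = 36 \<or> n = 37 \<or> n = 38 \<or> n = 39 \<or> n = 40 \<or> n = 41 \<or> n = 42 \<or> n = 43 \<or> n = 44 \<or> n = 45 \<or> n = 46 \<or> n = 47 \<or> n = 48" using n11 by arith
  thus ?thesis by (elim disjE) (simp_all only: ac11 ac12 ac13 ac14 ac15 ac16 ac17 ac18 ac19 ac20 ac21 ac22 ac23 ac24 ac25 ac26 ac27 ac28 ac29 ac30 ac31 ac32 ac33 ac34 ac35 ac36 ac37 ac38 ac39 ac40 ac41 ac42 ac43 ac44 ac45 ac46 ac47 ac48)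
qed

theorem lemma3:
  fixes n :: nat and E :: "nat \<Rightarrow> nat \<Rightarrow> bool"
  assumes "n \<ge> 11"
    and "quartic n E" and "connected_graph n E"
    and "\<forall>F. quartic n F \<and> connected_graph n F \<longrightarrow>
               algebraic_connectivity n E \<le> algebraic_connectivity n F"
  shows "(n \<ge> 11 \<longrightarrow> algebraic_connectivity n E < 0.355) \<and>
         (n \<ge> 13 \<longrightarrow> algebraic_connectivity n E < 0.268) \<and>
         (n \<ge> 18 \<longrightarrow> algebraic_connectivity n E < 0.129) \<and>
         (n \<ge> 21 \<longrightarrow> algebraic_connectivity n E < 0.091) \<and>
         (n \<ge> 26 \<longrightarrow> algebraic_connectivity n E < 0.059)"
proof -
  note p = fam_params[OF assms(1)]
  have q: "quartic n (famG (r1f n) (r2f n) n)" by (rule fam_quartic[OF p])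
  have c: "connected_graph n (famG (r1f n) (r2f n) n)" by (rule fam_connected[OF p])
  have "algebraic_connectivity n E \<le> algebraic_connectivity n (famG (r1f n) (r2f n) n)"
    using assms(4) q c by blast
  also have "\<dots> < bnd n" by (rule fam_lt[OF assms(1)])
  finally have A: "algebraic_connectivity n E < bnd n" .
  show ?thesis using A assms(1) unfolding bnd_def by (auto split: if_splits)
qed

end
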